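(* Let $e=uv$ be an edge of a graph $G$. Then $\operatorname{reg}(\mathcal{D}(G;e))=\operatorname{reg}(G/e)+1$.
   Context: $\mathcal{D}(G;e)$ is the double edge subdivision: delete the edge $uv$ and add two new vertices $a,b$ with edges $ua,ab,bv$. For an edge $e=xy$, $G/e$ is obtained from $G-\{x,y\}$ by adding a new vertex adjacent to every vertex of $(N_G(x)\cup N_G(y))\setminus\{x,y\}$. $\operatorname{reg}(G)=\max\{j\ge0:\widetilde H_{j-1}(\operatorname{Ind}(G[S]);\Bbbk)\neq0\text{ for some }S\subseteq V(G)\}$ over a field $\Bbbk$, $\operatorname{Ind}$ the independence complex. *)

theory Defs
  imports Main
begin

type_synonym 'a graph = "'a set \<times> 'a set set"

definition is_graph :: "'a graph \<Rightarrow> bool" where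
  "is_graph G \<longleftrightarrow> finite (fst G) \<and>
     (\<forall>e\<in>snd G. \<exists>x y. x \<noteq> y \<and> e = {x, y} \<and> x \<in> fst G \<and> y \<in> fst G)"

definition nbhd :: "'a graph \<Rightarrow> 'a \<Rightarrow> 'a set" where
  "nbhd G x = {z. {x, z} \<in> snd G}"

definition dsub :: "'a graph \<Rightarrow> 'a \<Rightarrow> 'a \<Rightarrow> 'a \<Rightarrow> 'a \<Rightarrow> 'a graph" where
  "dsub G u v a b = (fst G \<union> {a, b}, (snd G - {{u, v}}) \<union> {{u, a}, {a, b}, {b, v}})"

definition contract :: "'a graph \<Rightarrow> 'a \<Rightarrow> 'a \<Rightarrow> 'a \<Rightarrow> 'a graph" where
  "contract G x y w = ((fst G - {x, y}) \<union> {w},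
     {e \<in> snd G. x \<notin> e \<and> y \<notin> e} \<union>
     {{w, z} | z. z \<in> (nbhd G x \<union> nbhd G y) - {x, y}})"

text \<open>Independence complex of the induced subgraph G[S] (faces as vertex sets, including the empty face).\<close>
definition Ind_induced :: "'a graph \<Rightarrow> 'a set \<Rightarrow> 'a set set" where
  "Ind_induced G S = {T. T \<subseteq> S \<and> (\<forall>e\<in>snd G. e \<subseteq> S \<longrightarrow> \<not> e \<subseteq> T)}"

text \<open>Simplicial chains with coefficients in a field 'k: functions on faces; faces oriented
  by the linear order of vertices. Faces with j vertices are (j-1)-dimensional; the empty face
  has dimension -1 (augmented complex, giving reduced homology).\<close>
definition faces :: "'a set set \<Rightarrow> nat \<Rightarrow> 'a set set" where
  "faces K j = {\<sigma> \<in> K. card \<sigma> = j}"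

definition osign :: "'a::linorder \<Rightarrow> 'a set \<Rightarrow> 'k::field" where
  "osign x \<sigma> = (-1) ^ card {y \<in> \<sigma>. y < x}"

definition bdry :: "'a::linorder set set \<Rightarrow> ('a set \<Rightarrow> 'k::field) \<Rightarrow> 'a set \<Rightarrow> 'k" where
  "bdry K c \<tau> = (\<Sum>x\<in>{x. x \<notin> \<tau> \<and> insert x \<tau> \<in> K}. osign x (insert x \<tau>) * c (insert x \<tau>))"

text \<open>red_homology_nonzero k K j  iff  the reduced homology group of K in dimension j-1
  (over the field 'k) is nonzero.\<close>
definition red_homology_nonzero :: "'k::field itself \<Rightarrow> 'a::linorder set set \<Rightarrow> nat \<Rightarrow> bool" where
  "red_homology_nonzero _ K j \<longleftrightarrow>
     (\<exists>z :: 'a set \<Rightarrow> 'k. (\<forall>\<sigma>. z \<sigma> \<noteq> 0 \<longrightarrow> \<sigma> \<in> faces K j) \<and> (\<forall>\<tau>. bdry K z \<tau> = 0) \<and>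
        \<not> (\<exists>c :: 'a set \<Rightarrow> 'k. (\<forall>\<sigma>. c \<sigma> \<noteq> 0 \<longrightarrow> \<sigma> \<in> faces K (Suc j)) \<and> bdry K c = z))"

definition reg :: "'k::field itself \<Rightarrow> 'a::linorder graph \<Rightarrow> nat" where
  "reg k G = Max {j. \<exists>S \<subseteq> fst G. red_homology_nonzero k (Ind_induced G S) j}"

end

theory Submission
  imports Defs "HOL-Library.Product_Lexorder"
begin

definition bd :: "'a::linorder set \<Rightarrow> ('a set \<Rightarrow> 'k::field) \<Rightarrow> 'a set \<Rightarrow> 'k" where
  "bd U c \<tau> = (\<Sum>x\<in>U - \<tau>. osign x (insert x \<tau>) * c (insert x \<tau>))"

definition cone :: "'a::linorder \<Rightarrow> ('a set \<Rightarrow> 'k::field) \<Rightarrow> 'a set \<Rightarrow> 'k" where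
  "cone x c \<sigma> = (if x \<in> \<sigma> then osign x \<sigma> * c (\<sigma> - {x}) else 0)"

definition supp_in :: "('a set \<Rightarrow> 'k::zero) \<Rightarrow> 'a set set \<Rightarrow> bool" where
  "supp_in c A \<longleftrightarrow> (\<forall>\<sigma>. c \<sigma> \<noteq> 0 \<longrightarrow> \<sigma> \<in> A)"

lemma osign_sq: "osign x s * (osign x s :: 'k::field) = 1"
  unfolding osign_def by (simp add: power_mult_distrib[symmetric])

lemma osign_nz: "(osign x s :: 'k::field) \<noteq> 0"
  unfolding osign_def by simp

lemma bdry_eq_bd:
  assumes "finite U" "K \<subseteq> Pow U" "supp_in c K"
  shows "bdry K c = bd U c"
proof
  fix \<tau>
  have sub: "{x. x \<notin> \<tau> \<and> insert x \<tau> \<in> K} \<subseteq> U - \<tau>" using assms(2) by auto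
  show "bdry K c \<tau> = bd U c \<tau>"
    unfolding bdry_def bd_def
    apply (rule sum.mono_neutral_left)
    using assms sub by (auto simp: supp_in_def)
qed

lemma sign_swap:
  assumes "finite t" "x \<in> t" "y \<notin> t"
  shows "osign y (insert y t) * (osign x (insert y t) :: 'k::field)
         = - (osign x t * osign y (insert y (t - {x})))"
proof -
  let ?r = "t - {x}"
  have xy: "x \<noteq> y" using assms by auto
  have fr: "finite ?r" using assms by auto
  have e1: "{z \<in> insert y t. z < y} = (if x < y then insert x {z\<in>?r. z < y} else {z\<in>?r. z < y})"
    using assms by auto
  have e2: "{z \<in> insert y t. z < x} = (if y < x then insert y {z\<in>?r. z < x} else {z\<in>?r. z < x})"
    using assms by auto
  have e3: "{z \<in> t. z < x} = {z\<in>?r. z < x}" by auto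
  have e4: "{z \<in> insert y ?r. z < y} = {z\<in>?r. z < y}" by auto
  have c1: "card {z \<in> insert y t. z < y} = card {z\<in>?r. z < y} + (if x < y then 1 else 0)"
    unfolding e1 using fr by (simp split: if_split)
  have c2: "card {z \<in> insert y t. z < x} = card {z\<in>?r. z < x} + (if y < x then 1 else 0)"
    unfolding e2 using fr assms by (simp split: if_split)
  show ?thesis
    unfolding osign_def c1 c2 e3 e4
    using xy by (cases "x < y") (auto simp: power_add not_less_iff_gr_or_eq)
qed

lemma cone_bd:
  fixes c :: "'a::linorder set \<Rightarrow> 'k::field"
  assumes U: "finite U" "x \<in> U" and c: "\<And>\<sigma>. c \<sigma> \<noteq> 0 \<Longrightarrow> \<sigma> \<subseteq> U \<and> x \<notin> \<sigma>"
  shows "bd U (cone x c) \<tau> = c \<tau> - cone x (bd U c) \<tau>"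
proof (cases "x \<in> \<tau>")
  case False
  have "bd U (cone x c) \<tau> = osign x (insert x \<tau>) * cone x c (insert x \<tau>)
        + (\<Sum>y\<in>(U - \<tau>) - {x}. osign y (insert y \<tau>) * cone x c (insert y \<tau>))"
    unfolding bd_def using U False by (subst sum.remove[of _ x]) auto
  also have "(\<Sum>y\<in>(U - \<tau>) - {x}. osign y (insert y \<tau>) * cone x c (insert y \<tau>)) = 0"
    using False by (intro sum.neutral) (auto simp: cone_def)
  finally have "bd U (cone x c) \<tau> = osign x (insert x \<tau>) * cone x c (insert x \<tau>)" by simp
  also have "\<dots> = c \<tau>" using False
    by (simp add: cone_def osign_sq mult.assoc[symmetric])
  finally show ?thesis using False by (simp add: cone_def)
next
  case True
  let ?r = "\<tau> - {x}"
  show ?thesis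
  proof (cases "\<tau> \<subseteq> U")
    case False
    have "bd U (cone x c) \<tau> = 0"
      unfolding bd_def
    proof (intro sum.neutral ballI)
      fix y assume "y \<in> U - \<tau>"
      have "c (insert y \<tau> - {x}) = 0"
        using c[of "insert y \<tau> - {x}"] False True U by auto
      then show "osign y (insert y \<tau>) * cone x c (insert y \<tau>) = 0" by (simp add: cone_def)
    qed
    moreover have "bd U c ?r = 0"
      unfolding bd_def
    proof (intro sum.neutral ballI)
      fix y assume "y \<in> U - ?r"
      have "c (insert y ?r) = 0"
        using c[of "insert y ?r"] False True U by auto
      then show "osign y (insert y ?r) * c (insert y ?r) = 0" by simp
    qed
    moreover have "c \<tau> = 0" using c True by blast
    ultimately show ?thesis using True by (simp add: cone_def)
  next
    case sub: True
    have ft: "finite \<tau>" using sub U finite_subset by blast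
    have cx: "c \<tau> = 0" using c True by blast
    have "bd U c ?r = osign x (insert x ?r) * c (insert x ?r)
        + (\<Sum>y\<in>(U - ?r) - {x}. osign y (insert y ?r) * c (insert y ?r))"
      unfolding bd_def using U by (subst sum.remove[of _ x]) auto
    also have "insert x ?r = \<tau>" using True by auto
    also have "(U - ?r) - {x} = U - \<tau>" using True by auto
    finally have br: "bd U c ?r = (\<Sum>y\<in>U - \<tau>. osign y (insert y ?r) * c (insert y ?r))"
      using cx by simp
    have "bd U (cone x c) \<tau> = (\<Sum>y\<in>U - \<tau>. osign y (insert y \<tau>) * (osign x (insert y \<tau>) * c (insert y ?r)))"
      unfolding bd_def
    proof (intro sum.cong refl)
      fix y assume y: "y \<in> U - \<tau>"
      then have "insert y \<tau> - {x} = insert y ?r" using True by auto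
      then show "osign y (insert y \<tau>) * cone x c (insert y \<tau>) =
          osign y (insert y \<tau>) * (osign x (insert y \<tau>) * c (insert y ?r))"
        using True by (simp add: cone_def)
    qed
    also have "\<dots> = (\<Sum>y\<in>U - \<tau>. - (osign x \<tau> * (osign y (insert y ?r) * c (insert y ?r))))"
    proof (intro sum.cong refl)
      fix y assume "y \<in> U - \<tau>"
      then have s: "osign y (insert y \<tau>) * (osign x (insert y \<tau>) :: 'k) =
             - (osign x \<tau> * osign y (insert y ?r))"
        using sign_swap[OF ft True, of y] by blast
      show "osign y (insert y \<tau>) * (osign x (insert y \<tau>) * c (insert y ?r)) =
             - (osign x \<tau> * (osign y (insert y ?r) * c (insert y ?r)))"
        using s by (simp add: mult.assoc[symmetric])
    qed
    also have "\<dots> = - (osign x \<tau> * bd U c ?r)"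
      unfolding br by (simp add: sum_distrib_left sum_negf)
    finally show ?thesis using True cx by (simp add: cone_def)
  qed
qed

definition nzU :: "'k::field itself \<Rightarrow> 'a::linorder set \<Rightarrow> 'a set set \<Rightarrow> nat \<Rightarrow> bool" where
  "nzU k U K j \<longleftrightarrow> (\<exists>z::'a set \<Rightarrow> 'k. supp_in z (faces K j) \<and> bd U z = (\<lambda>_. 0) \<and>
     \<not> (\<exists>c::'a set \<Rightarrow> 'k. supp_in c (faces K (Suc j)) \<and> bd U c = z))"

definition dl :: "'a set set \<Rightarrow> 'a \<Rightarrow> 'a set set" where
  "dl K x = {\<sigma>\<in>K. x \<notin> \<sigma>}"

definition lkc :: "'a set set \<Rightarrow> 'a \<Rightarrow> 'a set set" where
  "lkc K x = {\<sigma>. x \<notin> \<sigma> \<and> insert x \<sigma> \<in> K}"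

definition dclosed :: "'a set set \<Rightarrow> bool" where
  "dclosed K \<longleftrightarrow> (\<forall>\<sigma>\<in>K. \<forall>\<tau>. \<tau> \<subseteq> \<sigma> \<longrightarrow> \<tau> \<in> K)"

lemma R_iff_nzU:
  fixes k :: "'k::field itself" and U :: "'a::linorder set"
  assumes "finite U" "K \<subseteq> Pow U"
  shows "red_homology_nonzero k K j \<longleftrightarrow> nzU k U K j"
proof -
  have fK: "\<And>n. faces K n \<subseteq> K" by (auto simp: faces_def)
  have e: "\<And>c::'a set \<Rightarrow> 'k. supp_in c (faces K n) \<Longrightarrow> bdry K c = bd U c" for n
    by (rule bdry_eq_bd[OF assms]) (use fK in \<open>auto simp: supp_in_def\<close>)
  show ?thesis
    unfolding red_homology_nonzero_def nzU_def supp_in_def[symmetric]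
  proof (intro iff_exI)
    fix z :: "'a set \<Rightarrow> 'k"
    have A: "supp_in z (faces K j) \<Longrightarrow> (\<forall>\<tau>. bdry K z \<tau> = 0) = (bd U z = (\<lambda>_. 0))"
      using e[of z j] by (simp add: fun_eq_iff)
    have B: "(\<exists>c. supp_in c (faces K (Suc j)) \<and> bdry K c = z) = (\<exists>c. supp_in c (faces K (Suc j)) \<and> bd U c = z)"
      using e[of _ "Suc j"] by metis
    show "(supp_in z (faces K j) \<and> (\<forall>\<tau>. bdry K z \<tau> = 0) \<and> \<not> (\<exists>c. supp_in c (faces K (Suc j)) \<and> bdry K c = z)) =
          (supp_in z (faces K j) \<and> bd U z = (\<lambda>_. 0) \<and> \<not> (\<exists>c. supp_in c (faces K (Suc j)) \<and> bd U c = z))"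
      using A B by blast
  qed
qed

lemma bd_add: "bd U (\<lambda>\<sigma>. f \<sigma> + g \<sigma>) \<tau> = bd U f \<tau> + bd U g \<tau>"
  by (simp add: bd_def distrib_left sum.distrib)
lemma bd_diff: "bd U (\<lambda>\<sigma>. f \<sigma> - g \<sigma>) \<tau> = bd U f \<tau> - bd U g \<tau>"
  by (simp add: bd_def right_diff_distrib sum_subtractf)
lemma bd_uminus: "bd U (\<lambda>\<sigma>. - f \<sigma>) \<tau> = - bd U f \<tau>"
  by (simp add: bd_def sum_negf)
lemma bd_zero: "bd U (\<lambda>\<sigma>. 0) \<tau> = 0"
  by (simp add: bd_def)

lemma bd_avoid:
  assumes "\<And>\<sigma>. f \<sigma> \<noteq> 0 \<Longrightarrow> x \<notin> \<sigma>" "x \<in> \<tau>"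
  shows "bd U f \<tau> = 0"
  unfolding bd_def using assms by (intro sum.neutral) auto

lemma cone_ins: "x \<notin> \<sigma> \<Longrightarrow> cone x f (insert x \<sigma>) = osign x (insert x \<sigma>) * f \<sigma>"
  by (simp add: cone_def)
lemma cone_out: "x \<notin> \<sigma> \<Longrightarrow> cone x f \<sigma> = 0"
  by (simp add: cone_def)

definition pa :: "'a \<Rightarrow> ('a set \<Rightarrow> 'k::field) \<Rightarrow> 'a set \<Rightarrow> 'k" where
  "pa x c \<sigma> = (if x \<in> \<sigma> then 0 else c \<sigma>)"
definition pb :: "'a::linorder \<Rightarrow> ('a set \<Rightarrow> 'k::field) \<Rightarrow> 'a set \<Rightarrow> 'k" where
  "pb x c \<sigma> = (if x \<in> \<sigma> then 0 else osign x (insert x \<sigma>) * c (insert x \<sigma>))"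

lemma decomp: "c \<sigma> = pa x c \<sigma> + cone x (pb x c) \<sigma>"
proof (cases "x \<in> \<sigma>")
  case True
  then have "insert x (\<sigma> - {x}) = \<sigma>" by auto
  then show ?thesis using True by (simp add: pa_def pb_def cone_def osign_sq mult.assoc[symmetric])
qed (simp add: pa_def cone_def)

lemma supp_mono: "supp_in c A \<Longrightarrow> A \<subseteq> B \<Longrightarrow> supp_in c B"
  by (auto simp: supp_in_def)
lemma pa_avoid: "pa x c \<sigma> \<noteq> 0 \<Longrightarrow> x \<notin> \<sigma>" by (auto simp: pa_def split: if_splits)
lemma pb_avoid: "pb x c \<sigma> \<noteq> 0 \<Longrightarrow> x \<notin> \<sigma>" by (auto simp: pb_def split: if_splits)
lemma supp_add: "supp_in a A \<Longrightarrow> supp_in b A \<Longrightarrow> supp_in (\<lambda>\<sigma>. a \<sigma> + (b \<sigma>::'k::field)) A"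
  unfolding supp_in_def
proof (intro allI impI)
  fix \<sigma> assume "\<forall>\<sigma>. a \<sigma> \<noteq> 0 \<longrightarrow> \<sigma> \<in> A" "\<forall>\<sigma>. b \<sigma> \<noteq> 0 \<longrightarrow> \<sigma> \<in> A" "a \<sigma> + b \<sigma> \<noteq> 0"
  then show "\<sigma> \<in> A" by (cases "a \<sigma> = 0") auto
qed
lemma supp_diff: "supp_in a A \<Longrightarrow> supp_in b A \<Longrightarrow> supp_in (\<lambda>\<sigma>. a \<sigma> - (b \<sigma>::'k::field)) A"
  unfolding supp_in_def
proof (intro allI impI)
  fix \<sigma> assume "\<forall>\<sigma>. a \<sigma> \<noteq> 0 \<longrightarrow> \<sigma> \<in> A" "\<forall>\<sigma>. b \<sigma> \<noteq> 0 \<longrightarrow> \<sigma> \<in> A" "a \<sigma> - b \<sigma> \<noteq> 0"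
  then show "\<sigma> \<in> A" by (cases "a \<sigma> = 0") auto
qed
lemma supp_uminus: "supp_in a A \<Longrightarrow> supp_in (\<lambda>\<sigma>. - (a \<sigma>::'k::field)) A"
  unfolding supp_in_def by auto

context
  fixes U :: "'a::linorder set" and K :: "'a set set" and x :: 'a
  assumes U: "finite U" "x \<in> U" and KU: "K \<subseteq> Pow U" and dc: "dclosed K"
begin

lemma lk_sub_dl: "lkc K x \<subseteq> dl K x"
  using dc unfolding lkc_def dl_def dclosed_def by blast

lemma faces_lk_sub: "faces (lkc K x) n \<subseteq> faces (dl K x) n"
  using lk_sub_dl by (auto simp: faces_def)

lemma faces_dl_sub: "faces (dl K x) n \<subseteq> faces K n"
  by (auto simp: faces_def dl_def)


lemma pa_supp: "supp_in c (faces K n) \<Longrightarrow> supp_in (pa x c) (faces (dl K x) n)"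
  by (auto simp: supp_in_def pa_def faces_def dl_def)

lemma pb_supp:
  assumes "supp_in c (faces K n)"
  shows "supp_in (pb x c) {\<sigma>\<in>lkc K x. Suc (card \<sigma>) = n}"
proof -
  { fix \<sigma> assume "pb x c \<sigma> \<noteq> 0"
    then have "x \<notin> \<sigma>" "insert x \<sigma> \<in> faces K n" using assms by (auto simp: supp_in_def pb_def split: if_splits)
    moreover have "insert x \<sigma> \<subseteq> U" using calculation KU by (auto simp: faces_def)
    then have "finite \<sigma>" using U finite_subset by auto
    ultimately have "\<sigma> \<in> lkc K x \<and> Suc (card \<sigma>) = n" by (auto simp: faces_def lkc_def) }
  then show ?thesis by (auto simp: supp_in_def)
qed

lemma cone_supp:
  assumes "supp_in c (faces (lkc K x) m)"
  shows "supp_in (cone x c) (faces K (Suc m))"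
proof -
  { fix \<sigma> assume "cone x c \<sigma> \<noteq> 0"
    then have xs: "x \<in> \<sigma>" and "c (\<sigma> - {x}) \<noteq> 0" by (auto simp: cone_def split: if_splits)
    then have "\<sigma> - {x} \<in> faces (lkc K x) m" using assms by (auto simp: supp_in_def)
    then have "insert x (\<sigma> - {x}) \<in> K" "card (\<sigma> - {x}) = m" by (auto simp: faces_def lkc_def)
    moreover have "insert x (\<sigma> - {x}) = \<sigma>" using xs by auto
    moreover have "finite \<sigma>" using calculation KU U by (metis Pow_iff finite_subset subsetD)
    moreover have "card \<sigma> = Suc m" using calculation xs card_Suc_Diff1 by metis
    ultimately have "\<sigma> \<in> faces K (Suc m)" by (auto simp: faces_def) }
  then show ?thesis by (auto simp: supp_in_def)
qed

lemma avoid_of_supp: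
  assumes "supp_in c A" "A \<subseteq> lkc K x \<or> A \<subseteq> dl K x"
  shows "c \<sigma> \<noteq> 0 \<Longrightarrow> \<sigma> \<subseteq> U \<and> x \<notin> \<sigma>"
proof -
  assume "c \<sigma> \<noteq> 0"
  then have s: "\<sigma> \<in> A" using assms(1) by (auto simp: supp_in_def)
  show "\<sigma> \<subseteq> U \<and> x \<notin> \<sigma>"
  proof (cases "A \<subseteq> lkc K x")
    case True
    then have "x \<notin> \<sigma>" "insert x \<sigma> \<in> K" using s by (auto simp: lkc_def)
    then show ?thesis using KU by blast
  next
    case False
    then have "\<sigma> \<in> K" "x \<notin> \<sigma>" using s assms(2) by (auto simp: dl_def)
    then show ?thesis using KU by blast
  qed
qed

lemma faces_lk: "faces (lkc K x) n \<subseteq> lkc K x" "faces (dl K x) n \<subseteq> dl K x"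
  by (auto simp: faces_def)


lemma bd_split:
  fixes c :: "'a set \<Rightarrow> 'k::field"
  assumes cU: "\<And>\<sigma>. c \<sigma> \<noteq> 0 \<Longrightarrow> \<sigma> \<subseteq> U"
  shows "bd U c \<tau> = bd U (pa x c) \<tau> + pb x c \<tau> - cone x (bd U (pb x c)) \<tau>"
proof -
  have cc: "c = (\<lambda>\<sigma>. pa x c \<sigma> + cone x (pb x c) \<sigma>)"
    by (rule ext) (rule decomp)
  have "bd U c \<tau> = bd U (\<lambda>\<sigma>. pa x c \<sigma> + cone x (pb x c) \<sigma>) \<tau>"
    by (subst cc) (rule refl)
  also have "\<dots> = bd U (pa x c) \<tau> + bd U (cone x (pb x c)) \<tau>" by (rule bd_add)
  also have "bd U (cone x (pb x c)) \<tau> = pb x c \<tau> - cone x (bd U (pb x c)) \<tau>"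
  proof (rule cone_bd[OF U])
    fix \<sigma> assume "pb x c \<sigma> \<noteq> 0"
    then show "\<sigma> \<subseteq> U \<and> x \<notin> \<sigma>" using cU[of "insert x \<sigma>"] by (auto simp: pb_def split: if_splits)
  qed
  finally show ?thesis by simp
qed

lemma cyc_parts:
  fixes z :: "'a set \<Rightarrow> 'k::field"
  assumes zU: "\<And>\<sigma>. z \<sigma> \<noteq> 0 \<Longrightarrow> \<sigma> \<subseteq> U" and zc: "bd U z = (\<lambda>_. 0)"
  shows "bd U (pb x z) = (\<lambda>_. 0)" "\<And>\<sigma>. bd U (pa x z) \<sigma> + pb x z \<sigma> = 0"
proof -
  show "bd U (pb x z) = (\<lambda>_. 0)"
  proof
    fix \<sigma>
    show "bd U (pb x z) \<sigma> = 0"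
    proof (cases "x \<in> \<sigma>")
      case True show ?thesis by (rule bd_avoid[of "pb x z" x, OF pb_avoid True])
    next
      case False
      have "0 = bd U z (insert x \<sigma>)" using zc by (simp add: fun_eq_iff)
      also have "\<dots> = bd U (pa x z) (insert x \<sigma>) + pb x z (insert x \<sigma>) - cone x (bd U (pb x z)) (insert x \<sigma>)"
        by (rule bd_split[OF zU])
      also have "bd U (pa x z) (insert x \<sigma>) = 0" by (rule bd_avoid[of "pa x z" x, OF pa_avoid insertI1])
      also have "pb x z (insert x \<sigma>) = 0" by (simp add: pb_def)
      finally show ?thesis using False by (simp add: cone_ins osign_nz)
    qed
  qed
  fix \<sigma>
  show "bd U (pa x z) \<sigma> + pb x z \<sigma> = 0"
  proof (cases "x \<in> \<sigma>")
    case True then show ?thesis using bd_avoid[of "pa x z" x, OF pa_avoid True] by (simp add: pb_def)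
  next
    case False
    have "0 = bd U z \<sigma>" using zc by (simp add: fun_eq_iff)
    also have "\<dots> = bd U (pa x z) \<sigma> + pb x z \<sigma> - cone x (bd U (pb x z)) \<sigma>"
      by (rule bd_split[OF zU])
    finally show ?thesis using False by (simp add: cone_out)
  qed
qed

lemma supp_U: "supp_in c (faces K n) \<Longrightarrow> c \<sigma> \<noteq> 0 \<Longrightarrow> \<sigma> \<subseteq> U"
  using KU by (auto simp: supp_in_def faces_def)

end

context
  fixes U :: "'a::linorder set" and K :: "'a set set" and x :: 'a
  assumes U: "finite U" "x \<in> U" and KU: "K \<subseteq> Pow U" and dc: "dclosed K"
begin

lemma DL:
  fixes k :: "'k::field itself"
  assumes nz: "nzU k U K j"
  shows "nzU k U (dl K x) j \<or> (1 \<le> j \<and> nzU k U (lkc K x) (j - 1))"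
proof -
  obtain z :: "'a set \<Rightarrow> 'k" where zs: "supp_in z (faces K j)" and zc: "bd U z = (\<lambda>_. 0)"
    and znb: "\<not> (\<exists>c::'a set \<Rightarrow> 'k. supp_in c (faces K (Suc j)) \<and> bd U c = z)"
    using nz unfolding nzU_def by blast
  have zU: "\<And>\<sigma>. z \<sigma> \<noteq> 0 \<Longrightarrow> \<sigma> \<subseteq> U" using supp_U[OF U KU dc zs] .
  define z0 where "z0 = pa x z"
  define z1 where "z1 = pb x z"
  have bz1: "bd U z1 = (\<lambda>_. 0)" unfolding z1_def by (rule cyc_parts(1)[OF U KU dc zU zc])
  have bz0: "\<And>\<sigma>. bd U z0 \<sigma> + z1 \<sigma> = 0" unfolding z0_def z1_def by (rule cyc_parts(2)[OF U KU dc zU zc])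
  have z0s: "supp_in z0 (faces (dl K x) j)" unfolding z0_def by (rule pa_supp[OF U KU dc zs])
  have z1s: "supp_in z1 {\<sigma>\<in>lkc K x. Suc (card \<sigma>) = j}" unfolding z1_def by (rule pb_supp[OF U KU dc zs])
  show ?thesis
  proof (cases "\<exists>c1::'a set \<Rightarrow> 'k. supp_in c1 (faces (lkc K x) j) \<and> bd U c1 = z1")
    case True
    then obtain c1 :: "'a set \<Rightarrow> 'k" where c1s: "supp_in c1 (faces (lkc K x) j)" and c1b: "bd U c1 = z1" by blast
    define z' where "z' = (\<lambda>\<sigma>. z0 \<sigma> + c1 \<sigma>)"
    have c1av: "\<And>\<sigma>. c1 \<sigma> \<noteq> 0 \<Longrightarrow> \<sigma> \<subseteq> U \<and> x \<notin> \<sigma>"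
      by (rule avoid_of_supp[OF U KU dc c1s]) (rule disjI1, auto simp: faces_def)
    have z's: "supp_in z' (faces (dl K x) j)"
      unfolding z'_def by (rule supp_add[OF z0s supp_mono[OF c1s faces_lk_sub[OF U KU dc]]])
    have z'c: "bd U z' = (\<lambda>_. 0)"
      unfolding z'_def by (rule ext) (simp add: bd_add c1b bz0)
    have "\<not> (\<exists>d::'a set \<Rightarrow> 'k. supp_in d (faces (dl K x) (Suc j)) \<and> bd U d = z')"
    proof
      assume "\<exists>d::'a set \<Rightarrow> 'k. supp_in d (faces (dl K x) (Suc j)) \<and> bd U d = z'"
      then obtain d :: "'a set \<Rightarrow> 'k" where ds: "supp_in d (faces (dl K x) (Suc j))" and db: "bd U d = z'" by blast
      define c where "c = (\<lambda>\<sigma>. d \<sigma> - cone x c1 \<sigma>)"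
      have cs: "supp_in c (faces K (Suc j))"
        unfolding c_def by (rule supp_diff[OF supp_mono[OF ds faces_dl_sub[OF U KU dc]] cone_supp[OF U KU dc c1s]])
      have "bd U c = z"
      proof
        fix \<tau>
        have "bd U c \<tau> = bd U d \<tau> - bd U (cone x c1) \<tau>" unfolding c_def by (rule bd_diff)
        also have "bd U (cone x c1) \<tau> = c1 \<tau> - cone x (bd U c1) \<tau>" by (rule cone_bd[OF U c1av])
        finally have "bd U c \<tau> = z0 \<tau> + cone x z1 \<tau>" using db c1b by (simp add: z'_def)
        then show "bd U c \<tau> = z \<tau>" using decomp[of z \<tau> x] by (simp add: z0_def z1_def)
      qed
      then show False using znb cs by blast
    qed
    then have "nzU k U (dl K x) j" unfolding nzU_def using z's z'c by blast
    then show ?thesis by blast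
  next
    case False
    have j1: "1 \<le> j"
    proof (rule ccontr)
      assume "\<not> 1 \<le> j"
      then have "j = 0" by simp
      then have "z1 = (\<lambda>_. 0)" using z1s by (auto simp: supp_in_def)
      then have "supp_in (\<lambda>_. 0::'k) (faces (lkc K x) j) \<and> bd U (\<lambda>_. 0::'k) = z1"
        by (simp add: supp_in_def bd_zero fun_eq_iff)
      then show False using False by blast
    qed
    have "supp_in z1 (faces (lkc K x) (j - 1))" using z1s j1 by (auto simp: supp_in_def faces_def)
    moreover have "Suc (j - 1) = j" using j1 by simp
    ultimately have "nzU k U (lkc K x) (j - 1)" unfolding nzU_def using bz1 False by metis
    then show ?thesis using j1 by blast
  qed
qed

lemma cyc_bound:
  fixes k :: "'k::field itself"
  assumes "\<not> nzU k U L m" "supp_in (z::'a set \<Rightarrow> 'k) (faces L m)" "bd U z = (\<lambda>_. 0)"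
  shows "\<exists>c::'a set \<Rightarrow> 'k. supp_in c (faces L (Suc m)) \<and> bd U c = z"
  using assms unfolding nzU_def by blast

lemma link_acyc:
  fixes k :: "'k::field itself"
  assumes la: "\<And>m. \<not> nzU k U (lkc K x) m"
  shows "nzU k U K j \<longleftrightarrow> nzU k U (dl K x) j"
proof
  assume "nzU k U K j" then show "nzU k U (dl K x) j" using DL la by blast
next
  assume "nzU k U (dl K x) j"
  then obtain z :: "'a set \<Rightarrow> 'k" where zs: "supp_in z (faces (dl K x) j)" and zc: "bd U z = (\<lambda>_. 0)"
    and znb: "\<not> (\<exists>c::'a set \<Rightarrow> 'k. supp_in c (faces (dl K x) (Suc j)) \<and> bd U c = z)"
    unfolding nzU_def by blast
  have zK: "supp_in z (faces K j)" using zs faces_dl_sub[OF U KU dc, of j] by (auto simp: supp_in_def)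
  have zav: "\<And>\<sigma>. z \<sigma> \<noteq> 0 \<Longrightarrow> x \<notin> \<sigma>" using zs by (auto simp: supp_in_def faces_def dl_def)
  have "\<not> (\<exists>c::'a set \<Rightarrow> 'k. supp_in c (faces K (Suc j)) \<and> bd U c = z)"
  proof
    assume "\<exists>c::'a set \<Rightarrow> 'k. supp_in c (faces K (Suc j)) \<and> bd U c = z"
    then obtain c :: "'a set \<Rightarrow> 'k" where cs: "supp_in c (faces K (Suc j))" and cb: "bd U c = z" by blast
    have cU: "\<And>\<sigma>. c \<sigma> \<noteq> 0 \<Longrightarrow> \<sigma> \<subseteq> U" using supp_U[OF U KU dc cs] .
    have sp: "\<And>\<tau>. z \<tau> = bd U (pa x c) \<tau> + pb x c \<tau> - cone x (bd U (pb x c)) \<tau>"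
      using bd_split[OF U KU dc cU] cb by metis
    have c1c: "bd U (pb x c) = (\<lambda>_. 0)"
    proof
      fix \<sigma>
      show "bd U (pb x c) \<sigma> = 0"
      proof (cases "x \<in> \<sigma>")
        case True show ?thesis by (rule bd_avoid[of "pb x c" x, OF pb_avoid[of x c] True])
      next
        case False
        have "0 = z (insert x \<sigma>)" using zav[of "insert x \<sigma>"] by auto
        also have "\<dots> = bd U (pa x c) (insert x \<sigma>) + pb x c (insert x \<sigma>) - cone x (bd U (pb x c)) (insert x \<sigma>)"
          by (rule sp)
        also have "bd U (pa x c) (insert x \<sigma>) = 0" by (rule bd_avoid[of "pa x c" x, OF pa_avoid[of x c] insertI1])
        also have "pb x c (insert x \<sigma>) = 0" by (simp add: pb_def)
        finally show ?thesis using False by (simp add: cone_ins osign_nz)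
      qed
    qed
    have c1s: "supp_in (pb x c) (faces (lkc K x) j)"
      using pb_supp[OF U KU dc cs] by (auto simp: supp_in_def faces_def)
    obtain e :: "'a set \<Rightarrow> 'k" where es: "supp_in e (faces (lkc K x) (Suc j))" and eb: "bd U e = pb x c"
      using cyc_bound[OF la c1s c1c] by blast
    define d where "d = (\<lambda>\<sigma>. pa x c \<sigma> + e \<sigma>)"
    have ds: "supp_in d (faces (dl K x) (Suc j))"
      unfolding d_def by (rule supp_add[OF pa_supp[OF U KU dc cs] supp_mono[OF es faces_lk_sub[OF U KU dc]]])
    have "bd U d = z"
    proof
      fix \<tau>
      show "bd U d \<tau> = z \<tau>"
      proof (cases "x \<in> \<tau>")
        case True
        have "z \<tau> = 0" using zav True by blast
        moreover have "bd U d \<tau> = 0"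
        proof (rule bd_avoid[OF _ True])
          fix \<sigma> assume "d \<sigma> \<noteq> 0"
          then show "x \<notin> \<sigma>" using es unfolding d_def pa_def supp_in_def faces_def lkc_def
            by (auto split: if_splits)
        qed
        ultimately show ?thesis by simp
      next
        case False
        have "bd U d \<tau> = bd U (pa x c) \<tau> + pb x c \<tau>" unfolding d_def by (simp add: bd_add eb)
        then show ?thesis using sp[of \<tau>] False by (simp add: cone_out)
      qed
    qed
    then show False using znb ds by blast
  qed
  then show "nzU k U K j" unfolding nzU_def using zK zc by blast
qed

lemma del_acyc:
  fixes k :: "'k::field itself"
  assumes da: "\<And>m. \<not> nzU k U (dl K x) m"
  shows "nzU k U K (Suc j) \<longleftrightarrow> nzU k U (lkc K x) j" "\<not> nzU k U K 0"
proof -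
  show "\<not> nzU k U K 0" using DL[of k 0] da by auto
  show "nzU k U K (Suc j) \<longleftrightarrow> nzU k U (lkc K x) j"
  proof
    assume "nzU k U K (Suc j)" then show "nzU k U (lkc K x) j" using DL[of k "Suc j"] da by auto
  next
    assume "nzU k U (lkc K x) j"
    then obtain z1 :: "'a set \<Rightarrow> 'k" where zs: "supp_in z1 (faces (lkc K x) j)" and zc: "bd U z1 = (\<lambda>_. 0)"
      and znb: "\<not> (\<exists>c::'a set \<Rightarrow> 'k. supp_in c (faces (lkc K x) (Suc j)) \<and> bd U c = z1)"
      unfolding nzU_def by blast
    have zd: "supp_in z1 (faces (dl K x) j)" using zs faces_lk_sub[OF U KU dc, of j] by (auto simp: supp_in_def)
    obtain c0 :: "'a set \<Rightarrow> 'k" where c0s: "supp_in c0 (faces (dl K x) (Suc j))" and c0b: "bd U c0 = z1"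
      using cyc_bound[OF da zd zc] by blast
    have z1av: "\<And>\<sigma>. z1 \<sigma> \<noteq> 0 \<Longrightarrow> \<sigma> \<subseteq> U \<and> x \<notin> \<sigma>"
      by (rule avoid_of_supp[OF U KU dc zs]) (rule disjI1, auto simp: faces_def)
    define Z where "Z = (\<lambda>\<sigma>. cone x z1 \<sigma> - c0 \<sigma>)"
    have Zs: "supp_in Z (faces K (Suc j))"
      unfolding Z_def by (rule supp_diff[OF cone_supp[OF U KU dc zs] supp_mono[OF c0s faces_dl_sub[OF U KU dc]]])
    have Zc: "bd U Z = (\<lambda>_. 0)"
    proof
      fix \<tau>
      have "bd U Z \<tau> = bd U (cone x z1) \<tau> - bd U c0 \<tau>" unfolding Z_def by (rule bd_diff)
      also have "bd U (cone x z1) \<tau> = z1 \<tau> - cone x (bd U z1) \<tau>" by (rule cone_bd[OF U z1av])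
      finally show "bd U Z \<tau> = 0" using zc c0b by (simp add: cone_def)
    qed
    have "\<not> (\<exists>d::'a set \<Rightarrow> 'k. supp_in d (faces K (Suc (Suc j))) \<and> bd U d = Z)"
    proof
      assume "\<exists>d::'a set \<Rightarrow> 'k. supp_in d (faces K (Suc (Suc j))) \<and> bd U d = Z"
      then obtain d :: "'a set \<Rightarrow> 'k" where ds: "supp_in d (faces K (Suc (Suc j)))" and db: "bd U d = Z" by blast
      have dU: "\<And>\<sigma>. d \<sigma> \<noteq> 0 \<Longrightarrow> \<sigma> \<subseteq> U" using supp_U[OF U KU dc ds] .
      have c0av: "\<And>\<sigma>. c0 \<sigma> \<noteq> 0 \<Longrightarrow> x \<notin> \<sigma>"
        using c0s by (auto simp: supp_in_def faces_def dl_def)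
      have "bd U (\<lambda>\<sigma>. - pb x d \<sigma>) = z1"
      proof
        fix \<sigma>
        show "bd U (\<lambda>\<sigma>. - pb x d \<sigma>) \<sigma> = z1 \<sigma>"
        proof (cases "x \<in> \<sigma>")
          case True
          then show ?thesis using bd_avoid[of "pb x d" x, OF pb_avoid[of x d] True] z1av
            by (auto simp: bd_uminus)
        next
          case False
          have "Z (insert x \<sigma>) = osign x (insert x \<sigma>) * z1 \<sigma>"
            unfolding Z_def using False c0av[of "insert x \<sigma>"] by (auto simp: cone_ins)
          moreover have "Z (insert x \<sigma>) = bd U (pa x d) (insert x \<sigma>) + pb x d (insert x \<sigma>)
              - cone x (bd U (pb x d)) (insert x \<sigma>)"
            using bd_split[OF U KU dc dU] db by metis
          moreover have "bd U (pa x d) (insert x \<sigma>) = 0" by (rule bd_avoid[of "pa x d" x, OF pa_avoid[of x d] insertI1])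
          moreover have "pb x d (insert x \<sigma>) = 0" by (simp add: pb_def)
          ultimately have "osign x (insert x \<sigma>) * z1 \<sigma> = - (osign x (insert x \<sigma>) * bd U (pb x d) \<sigma>)"
            using False by (simp add: cone_ins)
          then have "z1 \<sigma> = - bd U (pb x d) \<sigma>"
            by (metis mult_minus_right mult_left_cancel osign_nz)
          then show ?thesis by (simp add: bd_uminus)
        qed
      qed
      moreover have "supp_in (\<lambda>\<sigma>. - pb x d \<sigma>) (faces (lkc K x) (Suc j))"
        using pb_supp[OF U KU dc ds] by (auto simp: supp_in_def faces_def)
      ultimately show False using znb by blast
    qed
    then show "nzU k U K (Suc j)" unfolding nzU_def using Zs Zc by blast
  qed
qed

lemma cone_acyc:
  fixes k :: "'k::field itself"
  assumes ins: "\<And>\<sigma>. \<sigma> \<in> K \<Longrightarrow> insert x \<sigma> \<in> K"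
  shows "\<not> nzU k U K j"
proof
  assume "nzU k U K j"
  then obtain z :: "'a set \<Rightarrow> 'k" where zs: "supp_in z (faces K j)" and zc: "bd U z = (\<lambda>_. 0)"
    and znb: "\<not> (\<exists>c::'a set \<Rightarrow> 'k. supp_in c (faces K (Suc j)) \<and> bd U c = z)"
    unfolding nzU_def by blast
  have zU: "\<And>\<sigma>. z \<sigma> \<noteq> 0 \<Longrightarrow> \<sigma> \<subseteq> U" using supp_U[OF U KU dc zs] .
  have bz0: "\<And>\<sigma>. bd U (pa x z) \<sigma> + pb x z \<sigma> = 0" by (rule cyc_parts(2)[OF U KU dc zU zc])
  have z0s: "supp_in (pa x z) (faces (dl K x) j)" by (rule pa_supp[OF U KU dc zs])
  have z0lk: "supp_in (pa x z) (faces (lkc K x) j)"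
    using z0s ins by (auto simp: supp_in_def faces_def dl_def lkc_def)
  have av: "\<And>\<sigma>. pa x z \<sigma> \<noteq> 0 \<Longrightarrow> \<sigma> \<subseteq> U \<and> x \<notin> \<sigma>"
    by (rule avoid_of_supp[OF U KU dc z0lk]) (rule disjI1, auto simp: faces_def)
  have "bd U (cone x (pa x z)) = z"
  proof
    fix \<tau>
    have "bd U (cone x (pa x z)) \<tau> = pa x z \<tau> - cone x (bd U (pa x z)) \<tau>" by (rule cone_bd[OF U av])
    also have "cone x (bd U (pa x z)) \<tau> = - cone x (pb x z) \<tau>"
    proof -
      have "bd U (pa x z) (\<tau> - {x}) = - pb x z (\<tau> - {x})"
        using bz0[of "\<tau> - {x}"] by (simp add: eq_neg_iff_add_eq_0)
      then show ?thesis by (simp add: cone_def)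
    qed
    finally show "bd U (cone x (pa x z)) \<tau> = z \<tau>" using decomp[of z \<tau> x] by simp
  qed
  moreover have "supp_in (cone x (pa x z)) (faces K (Suc j))" by (rule cone_supp[OF U KU dc z0lk])
  ultimately show False using znb by blast
qed

lemma both_acyc:
  fixes k :: "'k::field itself"
  assumes "\<And>m. \<not> nzU k U (dl K x) m" "\<And>m. \<not> nzU k U (lkc K x) m"
  shows "\<not> nzU k U K j"
  using DL[of k j] assms by blast

end

definition indc :: "'a set set \<Rightarrow> 'a set \<Rightarrow> 'a set set" where
  "indc E S = {T. T \<subseteq> S \<and> (\<forall>e\<in>E. e \<subseteq> S \<longrightarrow> \<not> e \<subseteq> T)}"

definition Nb :: "'a set set \<Rightarrow> 'a \<Rightarrow> 'a set" where
  "Nb E x = {y. {x, y} \<in> E}"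

definition twosets :: "'a set set \<Rightarrow> bool" where
  "twosets E \<longleftrightarrow> (\<forall>e\<in>E. \<exists>p q. p \<noteq> q \<and> e = {p, q})"

abbreviation RR :: "'k::field itself \<Rightarrow> 'a::linorder set set \<Rightarrow> 'a set \<Rightarrow> nat \<Rightarrow> bool" where
  "RR k E S j \<equiv> red_homology_nonzero k (indc E S) j"

lemma Ind_induced_indc: "Ind_induced G S = indc (snd G) S"
  by (simp add: Ind_induced_def indc_def)

lemma indc_pow: "indc E S \<subseteq> Pow S" by (auto simp: indc_def)

lemma indc_dc: "dclosed (indc E S)"
  unfolding dclosed_def indc_def by blast

lemma indc_mono_pow: "S' \<subseteq> S \<Longrightarrow> indc E S' \<subseteq> Pow S" by (auto simp: indc_def)

lemma dl_indc: "dl (indc E S) x = indc E (S - {x})"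
  unfolding dl_def indc_def by auto

lemma lkc_indc:
  assumes "twosets E" and xS: "x \<in> S"
  shows "lkc (indc E S) x = indc E (S - insert x (Nb E x))"
proof
  show "lkc (indc E S) x \<subseteq> indc E (S - insert x (Nb E x))"
  proof
    fix \<sigma> assume s: "\<sigma> \<in> lkc (indc E S) x"
    have xs: "x \<notin> \<sigma>" and ii: "insert x \<sigma> \<in> indc E S" using s unfolding lkc_def by blast+
    have ins: "insert x \<sigma> \<subseteq> S" using ii unfolding indc_def by blast
    have ind: "\<And>e. e \<in> E \<Longrightarrow> e \<subseteq> S \<Longrightarrow> \<not> e \<subseteq> insert x \<sigma>" using ii unfolding indc_def by blast
    have nb: "\<And>y. y \<in> \<sigma> \<Longrightarrow> y \<notin> Nb E x"
    proof
      fix y assume y: "y \<in> \<sigma>" "y \<in> Nb E x"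
      then have "{x, y} \<in> E" unfolding Nb_def by blast
      moreover have "{x, y} \<subseteq> S" using ins y by blast
      moreover have "{x, y} \<subseteq> insert x \<sigma>" using y by blast
      ultimately show False using ind by blast
    qed
    have "\<sigma> \<subseteq> S - insert x (Nb E x)" using xs ins nb by blast
    moreover have "\<forall>e\<in>E. e \<subseteq> S - insert x (Nb E x) \<longrightarrow> \<not> e \<subseteq> \<sigma>"
    proof (intro ballI impI notI)
      fix e assume "e \<in> E" "e \<subseteq> S - insert x (Nb E x)" "e \<subseteq> \<sigma>"
      then show False using ind[of e] by blast
    qed
    ultimately show "\<sigma> \<in> indc E (S - insert x (Nb E x))" unfolding indc_def by blast
  qed
next
  show "indc E (S - insert x (Nb E x)) \<subseteq> lkc (indc E S) x"
  proof
    fix \<sigma> assume s: "\<sigma> \<in> indc E (S - insert x (Nb E x))"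
    have sub: "\<sigma> \<subseteq> S - insert x (Nb E x)" using s unfolding indc_def by blast
    have ind: "\<And>e. e \<in> E \<Longrightarrow> e \<subseteq> S - insert x (Nb E x) \<Longrightarrow> \<not> e \<subseteq> \<sigma>"
      using s unfolding indc_def by blast
    have "\<forall>e\<in>E. e \<subseteq> S \<longrightarrow> \<not> e \<subseteq> insert x \<sigma>"
    proof (intro ballI impI notI)
      fix e assume e: "e \<in> E" "e \<subseteq> S" "e \<subseteq> insert x \<sigma>"
      obtain p q where pq: "p \<noteq> q" "e = {p, q}" using assms e(1) unfolding twosets_def by blast
      show False
      proof (cases "x \<in> e")
        case False
        then have "e \<subseteq> \<sigma>" using e by blast
        moreover then have "e \<subseteq> S - insert x (Nb E x)" using sub by blast
        ultimately show False using ind e(1) by blast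
      next
        case True
        then obtain y where "e = {x, y}" "y \<noteq> x" using pq by blast
        then have "y \<in> \<sigma>" "y \<in> Nb E x" using e unfolding Nb_def by auto
        then show False using sub by blast
      qed
    qed
    moreover have "insert x \<sigma> \<subseteq> S" using sub xS by blast
    ultimately show "\<sigma> \<in> lkc (indc E S) x" using sub unfolding lkc_def indc_def by blast
  qed
qed

lemma indc_cong:
  assumes "\<And>e. e \<subseteq> S \<Longrightarrow> e \<in> E \<longleftrightarrow> e \<in> E'"
  shows "indc E S = indc E' S"
  using assms unfolding indc_def by blast

context
  fixes E :: "'a::linorder set set" and S :: "'a set" and x :: 'a and k :: "'k::field itself"
  assumes E: "twosets E" and S: "finite S" "x \<in> S"
begin

lemma nz_conv: "S' \<subseteq> S \<Longrightarrow> RR k E S' j \<longleftrightarrow> nzU k S (indc E S') j"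
  by (rule R_iff_nzU[OF S(1) indc_mono_pow])

lemma G_DL:
  assumes "RR k E S j"
  shows "RR k E (S - {x}) j \<or> (1 \<le> j \<and> RR k E (S - insert x (Nb E x)) (j - 1))"
proof -
  have "nzU k S (indc E S) j" using assms nz_conv by blast
  then have "nzU k S (dl (indc E S) x) j \<or> (1 \<le> j \<and> nzU k S (lkc (indc E S) x) (j - 1))"
    by (rule DL[OF S indc_pow indc_dc])
  then show ?thesis unfolding dl_indc lkc_indc[OF E S(2)] using nz_conv[of "S - {x}"] nz_conv[of "S - insert x (Nb E x)"]
    by blast
qed

lemma G_cone:
  assumes "\<And>y. y \<in> S \<Longrightarrow> {x, y} \<notin> E"
  shows "\<not> RR k E S j"
proof -
  have "\<And>\<sigma>. \<sigma> \<in> indc E S \<Longrightarrow> insert x \<sigma> \<in> indc E S"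
  proof -
    fix \<sigma> assume s: "\<sigma> \<in> indc E S"
    show "insert x \<sigma> \<in> indc E S"
      unfolding indc_def
    proof (intro CollectI conjI ballI impI notI)
      show "insert x \<sigma> \<subseteq> S" using s S by (auto simp: indc_def)
    next
      fix e assume e: "e \<in> E" "e \<subseteq> S" "e \<subseteq> insert x \<sigma>"
      obtain p q where pq: "p \<noteq> q" "e = {p, q}" using E e(1) unfolding twosets_def by blast
      show False
      proof (cases "x \<in> e")
        case False
        then have "e \<subseteq> \<sigma>" using e by auto
        then show False using s e by (auto simp: indc_def)
      next
        case True
        then obtain y where "e = {x, y}" "y \<in> S" using pq e(2) by auto
        then show False using assms e(1) by blast
      qed
    qed
  qed
  then have "\<not> nzU k S (indc E S) j" by (rule cone_acyc[OF S indc_pow indc_dc])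
  then show ?thesis using nz_conv by blast
qed

lemma G_link:
  assumes "\<And>m. \<not> RR k E (S - insert x (Nb E x)) m"
  shows "RR k E S j \<longleftrightarrow> RR k E (S - {x}) j"
proof -
  have "\<And>m. \<not> nzU k S (lkc (indc E S) x) m"
    unfolding lkc_indc[OF E S(2)] using assms nz_conv[of "S - insert x (Nb E x)"] by blast
  then have "nzU k S (indc E S) j \<longleftrightarrow> nzU k S (dl (indc E S) x) j"
    by (rule link_acyc[OF S indc_pow indc_dc])
  then show ?thesis unfolding dl_indc using nz_conv[of "S - {x}"] nz_conv[of S] by blast
qed

lemma G_del:
  assumes "\<And>m. \<not> RR k E (S - {x}) m"
  shows "RR k E S (Suc j) \<longleftrightarrow> RR k E (S - insert x (Nb E x)) j" "\<not> RR k E S 0"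
proof -
  have a: "\<And>m. \<not> nzU k S (dl (indc E S) x) m"
    unfolding dl_indc using assms nz_conv[of "S - {x}"] by blast
  have "nzU k S (indc E S) (Suc j) \<longleftrightarrow> nzU k S (lkc (indc E S) x) j"
    by (rule del_acyc(1)[OF S indc_pow indc_dc a])
  then show "RR k E S (Suc j) \<longleftrightarrow> RR k E (S - insert x (Nb E x)) j"
    unfolding lkc_indc[OF E S(2)] using nz_conv[of "S - insert x (Nb E x)"] nz_conv[of S] by blast
  have "\<not> nzU k S (indc E S) 0" by (rule del_acyc(2)[OF S indc_pow indc_dc a])
  then show "\<not> RR k E S 0" using nz_conv by blast
qed

lemma G_both:
  assumes "\<And>m. \<not> RR k E (S - {x}) m" "\<And>m. \<not> RR k E (S - insert x (Nb E x)) m"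
  shows "\<not> RR k E S j"
  using G_DL assms by blast

end

definition regset :: "'k::field itself \<Rightarrow> 'a::linorder graph \<Rightarrow> nat set" where
  "regset k G = {j. \<exists>S \<subseteq> fst G. red_homology_nonzero k (Ind_induced G S) j}"

lemma bdry_zero: "bdry K (\<lambda>_. 0::'k::field) = (\<lambda>_. 0)"
  by (simp add: bdry_def fun_eq_iff)

lemma R_bound:
  fixes k :: "'k::field itself" and K :: "'a::linorder set set"
  assumes "red_homology_nonzero k K j" "K \<subseteq> Pow S" "finite S"
  shows "j \<le> card S"
proof -
  obtain z :: "'a set \<Rightarrow> 'k" where zs: "\<forall>\<sigma>. z \<sigma> \<noteq> 0 \<longrightarrow> \<sigma> \<in> faces K j"
    and znb: "\<not> (\<exists>c::'a set \<Rightarrow> 'k. (\<forall>\<sigma>. c \<sigma> \<noteq> 0 \<longrightarrow> \<sigma> \<in> faces K (Suc j)) \<and> bdry K c = z)"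
    using assms(1) unfolding red_homology_nonzero_def by blast
  have "\<exists>\<sigma>. z \<sigma> \<noteq> 0"
  proof (rule ccontr)
    assume "\<not> (\<exists>\<sigma>. z \<sigma> \<noteq> 0)"
    then have zz: "z = (\<lambda>_. 0)" by auto
    define c0 :: "'a set \<Rightarrow> 'k" where "c0 = (\<lambda>_. 0)"
    have "(\<forall>\<sigma>. c0 \<sigma> \<noteq> 0 \<longrightarrow> \<sigma> \<in> faces K (Suc j)) \<and> bdry K c0 = z"
      unfolding c0_def zz by (simp add: bdry_zero)
    then have "\<exists>c::'a set \<Rightarrow> 'k. (\<forall>\<sigma>. c \<sigma> \<noteq> 0 \<longrightarrow> \<sigma> \<in> faces K (Suc j)) \<and> bdry K c = z"
      by blast
    then show False using znb by blast
  qed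
  then obtain \<sigma> where "\<sigma> \<in> faces K j" using zs by blast
  then have "\<sigma> \<subseteq> S" "card \<sigma> = j" using assms(2) by (auto simp: faces_def)
  then show ?thesis using card_mono[OF assms(3)] by blast
qed

lemma R_empty: "red_homology_nonzero (k::'k::field itself) {{}::'a::linorder set} 0"
proof -
  define z :: "'a set \<Rightarrow> 'k" where "z = (\<lambda>\<sigma>. if \<sigma> = {} then 1 else 0)"
  have f0: "faces {{}::'a set} 0 = {{}}" by (auto simp: faces_def)
  have f1: "faces {{}::'a set} (Suc 0) = {}" by (auto simp: faces_def)
  have "\<forall>\<tau>. bdry {{}::'a set} z \<tau> = 0" by (simp add: bdry_def)
  moreover have "\<not> (\<exists>c::'a set \<Rightarrow> 'k. (\<forall>\<sigma>. c \<sigma> \<noteq> 0 \<longrightarrow> \<sigma> \<in> faces {{}} (Suc 0)) \<and> bdry {{}} c = z)"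
  proof
    assume "\<exists>c::'a set \<Rightarrow> 'k. (\<forall>\<sigma>. c \<sigma> \<noteq> 0 \<longrightarrow> \<sigma> \<in> faces {{}} (Suc 0)) \<and> bdry {{}} c = z"
    then obtain c :: "'a set \<Rightarrow> 'k" where "bdry {{}} c = z" by blast
    then have "bdry {{}} c {} = 1" by (simp add: z_def)
    then show False by (simp add: bdry_def)
  qed
  moreover have "\<forall>\<sigma>. z \<sigma> \<noteq> 0 \<longrightarrow> \<sigma> \<in> faces {{}} 0" using f0 by (simp add: z_def)
  ultimately show ?thesis unfolding red_homology_nonzero_def by blast
qed

lemma regset_props:
  assumes "finite (fst G)" "{} \<notin> snd G"
  shows "finite (regset k G)" "0 \<in> regset k G"
proof -
  have "regset k G \<subseteq> {..card (fst G)}"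
  proof
    fix j assume "j \<in> regset k G"
    then obtain S where S: "S \<subseteq> fst G" "red_homology_nonzero k (Ind_induced G S) j"
      unfolding regset_def by blast
    have "j \<le> card S" using R_bound[OF S(2)] S(1) assms
      by (metis Ind_induced_indc indc_pow rev_finite_subset)
    then show "j \<in> {..card (fst G)}" using card_mono[OF assms(1) S(1)] by simp
  qed
  then show "finite (regset k G)" using finite_subset by blast
  have "Ind_induced G {} = {{}}" using assms(2) by (auto simp: Ind_induced_def)
  then show "0 \<in> regset k G" unfolding regset_def using R_empty[of k] by force
qed

lemma reg_regset: "reg k G = Max (regset k G)"
  by (simp add: reg_def regset_def)

locale dsetup =
  fixes G :: "'a::linorder graph" and u v a b w :: 'a
  assumes gr: "is_graph G" and euv: "{u, v} \<in> snd G"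
    and aV: "a \<notin> fst G" and bV: "b \<notin> fst G" and ab: "a \<noteq> b"
    and wV: "w \<notin> fst G" and wa: "w \<noteq> a" and wb: "w \<noteq> b"
begin

abbreviation "V \<equiv> fst G"
abbreviation "E \<equiv> snd G"
abbreviation "NU \<equiv> Nb E u"
abbreviation "NV \<equiv> Nb E v"

definition EQ :: "'a set set" where
  "EQ = (E - {{u, v}}) \<union> {{u, a}, {a, b}, {b, v}} \<union> {{w, z} | z. z \<in> (NU \<union> NV) - {u, v}}"

lemma finV: "finite V" using gr by (simp add: is_graph_def)

lemma Eprop: "e \<in> E \<Longrightarrow> \<exists>x y. x \<noteq> y \<and> e = {x, y} \<and> x \<in> V \<and> y \<in> V"
  using gr by (simp add: is_graph_def)

lemma uvV: "u \<in> V" "v \<in> V" "u \<noteq> v"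
proof -
  obtain x y where "x \<noteq> y" "{u, v} = {x, y}" "x \<in> V" "y \<in> V" using Eprop[OF euv] by blast
  then show "u \<in> V" "v \<in> V" "u \<noteq> v" by (auto simp: doubleton_eq_iff)
qed

lemma Nb_V: "y \<in> Nb E x \<Longrightarrow> y \<in> V"
  using Eprop[of "{x, y}"] by (auto simp: Nb_def doubleton_eq_iff)

lemma Evs1: "{x, y} \<in> E \<Longrightarrow> x \<in> V"
  using Eprop[of "{x, y}"] by (auto simp: doubleton_eq_iff)
lemma Evs2: "{x, y} \<in> E \<Longrightarrow> y \<in> V"
  using Eprop[of "{x, y}"] by (auto simp: doubleton_eq_iff)

lemma Nb_irr: "x \<notin> Nb E x"
  using Eprop[of "{x}"] by (auto simp: Nb_def doubleton_eq_iff)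

lemma vNU: "v \<in> NU" and uNV: "u \<in> NV"
  using euv by (auto simp: Nb_def insert_commute)

lemma notNb: "a \<notin> Nb E x" "b \<notin> Nb E x" "w \<notin> Nb E x"
  using Nb_V aV bV wV by blast+

lemma neqs: "a \<noteq> u" "a \<noteq> v" "b \<noteq> u" "b \<noteq> v" "w \<noteq> u" "w \<noteq> v"
  using aV bV wV uvV by auto

lemma twoE: "twosets E"
  unfolding twosets_def using Eprop by blast

lemma twoQ: "twosets EQ"
  unfolding twosets_def
proof
  fix e assume "e \<in> EQ"
  then consider "e \<in> E" | "e = {u, a}" | "e = {a, b}" | "e = {b, v}" | z where "e = {w, z}" "z \<in> NU \<union> NV"
    unfolding EQ_def by blast
  then show "\<exists>p q. p \<noteq> q \<and> e = {p, q}"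
  proof cases
    case 1 then show ?thesis using Eprop by blast
  next
    case 2 then show ?thesis using neqs by blast
  next
    case 3 then show ?thesis using ab by blast
  next
    case 4 then show ?thesis using neqs by blast
  next
    case 5
    then have "z \<in> V" using Nb_V by blast
    then have "w \<noteq> z" using wV by blast
    then show ?thesis using 5 by blast
  qed
qed

lemma nbq_u: "y \<in> Nb EQ u \<longleftrightarrow> (y \<in> NU \<and> y \<noteq> v) \<or> y = a"
  unfolding Nb_def EQ_def using neqs uvV ab wa wb Nb_irr[of u]
  by (auto simp: doubleton_eq_iff Nb_def)

lemma nbq_v: "y \<in> Nb EQ v \<longleftrightarrow> (y \<in> NV \<and> y \<noteq> u) \<or> y = b"
  unfolding Nb_def EQ_def using neqs uvV ab wa wb Nb_irr[of v]
  by (auto simp: doubleton_eq_iff Nb_def insert_commute)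

lemma nbq_a: "y \<in> Nb EQ a \<longleftrightarrow> y = u \<or> y = b"
  unfolding Nb_def EQ_def using neqs uvV ab wa wb aV Nb_V
  by (auto simp: doubleton_eq_iff dest: Evs1 Evs2)

lemma nbq_b: "y \<in> Nb EQ b \<longleftrightarrow> y = a \<or> y = v"
  unfolding Nb_def EQ_def using neqs uvV ab wa wb bV Nb_V
  by (auto simp: doubleton_eq_iff dest: Evs1 Evs2)

lemma nbq_w: "y \<in> Nb EQ w \<longleftrightarrow> y \<in> NU \<union> NV \<and> y \<noteq> u \<and> y \<noteq> v"
  unfolding Nb_def EQ_def using neqs uvV ab wa wb wV Nb_V
  by (auto simp: doubleton_eq_iff dest: Evs1 Evs2)

lemma QD:
  assumes "S \<subseteq> V \<union> {a, b}"
  shows "indc (snd (dsub G u v a b)) S = indc EQ S"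
proof (rule indc_cong)
  fix e assume e: "e \<subseteq> S"
  have eq: "EQ = snd (dsub G u v a b) \<union> {{w, z} | z. z \<in> (NU \<union> NV) - {u, v}}"
    by (simp add: EQ_def dsub_def)
  have "w \<notin> S" using assms wV wa wb by blast
  then have "e \<notin> {{w, z} | z. z \<in> (NU \<union> NV) - {u, v}}" using e by blast
  then show "e \<in> snd (dsub G u v a b) \<longleftrightarrow> e \<in> EQ" unfolding eq by blast
qed

lemma QC:
  assumes "S \<subseteq> (V - {u, v}) \<union> {w}"
  shows "indc (snd (contract G u v w)) S = indc EQ S"
proof (rule indc_cong)
  fix e assume e: "e \<subseteq> S"
  have nb: "nbhd G u = NU" "nbhd G v = NV" by (auto simp: nbhd_def Nb_def)
  have c: "snd (contract G u v w) = {e \<in> E. u \<notin> e \<and> v \<notin> e} \<union> {{w, z} | z. z \<in> (NU \<union> NV) - {u, v}}"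
    by (simp add: contract_def nb)
  have "u \<notin> S" "v \<notin> S" "a \<notin> S" "b \<notin> S" using assms neqs wa wb aV bV by auto
  then have "u \<notin> e" "v \<notin> e" "a \<notin> e" "b \<notin> e" using e by auto
  then show "e \<in> snd (contract G u v w) \<longleftrightarrow> e \<in> EQ" unfolding c EQ_def by blast
qed

end

context dsetup
begin

context
  fixes k :: "'k::field itself"
begin

abbreviation RQ :: "'a set \<Rightarrow> nat \<Rightarrow> bool" where "RQ S j \<equiv> RR k EQ S j"

abbreviation "VC \<equiv> (V - {u, v}) \<union> {w}"

lemma finS: "S \<subseteq> V \<union> {a, b, w} \<Longrightarrow> finite S"
  by (rule finite_subset[of _ "V \<union> {a, b, w}"]) (use finV in auto)

lemma Qcone:
  assumes "finite S" "x \<in> S" "\<And>y. y \<in> S \<Longrightarrow> y \<notin> Nb EQ x"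
  shows "\<not> RQ S j"
  by (rule G_cone[OF twoQ assms(1,2)]) (use assms(3) in \<open>auto simp: Nb_def\<close>)

lemma Qlink:
  assumes "finite S" "x \<in> S" "S - insert x (Nb EQ x) = T" "\<And>m. \<not> RQ T m"
  shows "RQ S j \<longleftrightarrow> RQ (S - {x}) j"
  using G_link[OF twoQ assms(1,2)] assms(3,4) by blast

lemma Qdel:
  assumes "finite S" "x \<in> S" "\<And>m. \<not> RQ (S - {x}) m" "S - insert x (Nb EQ x) = T"
  shows "RQ S (Suc j) \<longleftrightarrow> RQ T j" "\<not> RQ S 0"
  using G_del[OF twoQ assms(1,2)] assms(3,4) by blast+

lemma QDL:
  assumes "finite S" "x \<in> S" "RQ S j"
  shows "RQ (S - {x}) j \<or> (1 \<le> j \<and> RQ (S - insert x (Nb EQ x)) (j - 1))"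
  using G_DL[OF twoQ assms(1,2)] assms(3) by blast

lemma Qboth:
  assumes "finite S" "x \<in> S" "\<And>m. \<not> RQ (S - {x}) m" "\<And>m. \<not> RQ (S - insert x (Nb EQ x)) m"
  shows "\<not> RQ S j"
  using G_both[OF twoQ assms(1,2)] assms(3,4) by blast

lemmas nbq = nbq_u nbq_v nbq_a nbq_b nbq_w

lemma Qfull:
  assumes X: "X \<subseteq> V - {u, v}"
  shows "RQ (X \<union> {u, v, a, b}) (Suc j) \<longleftrightarrow> RQ (insert w X) j" "\<not> RQ (X \<union> {u, v, a, b}) 0"
proof -
  have nX: "u \<notin> X" "v \<notin> X" "a \<notin> X" "b \<notin> X" "w \<notin> X" using X aV bV wV by auto
  have XV: "\<And>y. y \<in> X \<Longrightarrow> y \<in> V" using X by blast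
  note facts = nX neqs ab wa wb vNU uNV Nb_irr notNb
  define X' where "X' = X - NU - NV"
  have fin: "\<And>S. S \<subseteq> V \<union> {a, b, w} \<Longrightarrow> finite S" by (rule finS)
  have acyc1: "\<And>m. \<not> RQ (X' \<union> {u, v, a, b}) m"
  proof (rule Qboth[of _ b])
    show "finite (X' \<union> {u, v, a, b})" by (rule fin) (use X X'_def uvV in auto)
    show "b \<in> X' \<union> {u, v, a, b}" by simp
    fix m
    show "\<not> RQ (X' \<union> {u, v, a, b} - {b}) m"
      by (rule Qcone[of _ v]) (use X X'_def uvV facts in \<open>auto simp: nbq intro: fin\<close>)
    have e: "X' \<union> {u, v, a, b} - insert b (Nb EQ b) = insert u X'"
      using facts by (auto simp: nbq X'_def)
    show "\<not> RQ (X' \<union> {u, v, a, b} - insert b (Nb EQ b)) m"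
      unfolding e by (rule Qcone[of _ u]) (use X X'_def uvV facts in \<open>auto simp: nbq intro: fin\<close>)
  qed
  define S5 where "S5 = X \<union> {u, v, a, b, w}"
  have fS5: "finite S5" unfolding S5_def by (rule fin) (use X uvV in auto)
  have e1: "\<And>j'. RQ S5 j' \<longleftrightarrow> RQ (X \<union> {u, v, a, b}) j'"
  proof -
    fix j'
    have a: "S5 - insert w (Nb EQ w) = X' \<union> {u, v, a, b}"
      unfolding S5_def X'_def using facts by (auto simp: nbq)
    have b: "S5 - {w} = X \<union> {u, v, a, b}" unfolding S5_def using facts by auto
    show "RQ S5 j' \<longleftrightarrow> RQ (X \<union> {u, v, a, b}) j'"
      using Qlink[OF fS5 _ a acyc1, of j'] b by (simp add: S5_def)
  qed
  have acyc2: "\<And>m. \<not> RQ ((X - NU) \<union> {v, b, w}) m"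
  proof (rule Qboth[of _ v])
    show "finite ((X - NU) \<union> {v, b, w})" by (rule fin) (use X uvV in auto)
    show "v \<in> (X - NU) \<union> {v, b, w}" by simp
    fix m
    show "\<not> RQ ((X - NU) \<union> {v, b, w} - {v}) m"
      by (rule Qcone[of _ b]) (use X uvV facts in \<open>auto simp: nbq intro: fin\<close>)
    have e: "(X - NU) \<union> {v, b, w} - insert v (Nb EQ v) = insert w (X - NU - NV)"
      using facts by (auto simp: nbq)
    show "\<not> RQ ((X - NU) \<union> {v, b, w} - insert v (Nb EQ v)) m"
      unfolding e by (rule Qcone[of _ w]) (use X uvV facts in \<open>auto simp: nbq intro: fin\<close>)
  qed
  define S4 where "S4 = X \<union> {v, a, b, w}"
  have e2: "\<And>j'. RQ S5 j' \<longleftrightarrow> RQ S4 j'"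
  proof -
    fix j'
    have a: "S5 - insert u (Nb EQ u) = (X - NU) \<union> {v, b, w}"
      unfolding S5_def using facts by (auto simp: nbq)
    have b: "S5 - {u} = S4" unfolding S5_def S4_def using facts by auto
    show "RQ S5 j' \<longleftrightarrow> RQ S4 j'"
      using Qlink[OF fS5 _ a acyc2, of j'] b by (simp add: S5_def)
  qed
  have acyc3: "\<And>m. \<not> RQ ((X - NV) \<union> {a, w}) m"
    by (rule Qcone[of _ a]) (use X uvV facts in \<open>auto simp: nbq intro: fin\<close>)
  define S3 where "S3 = X \<union> {a, b, w}"
  have fS4: "finite S4" unfolding S4_def by (rule fin) (use X uvV in auto)
  have fS3: "finite S3" unfolding S3_def by (rule fin) (use X uvV in auto)
  have e3: "\<And>j'. RQ S4 j' \<longleftrightarrow> RQ S3 j'"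
  proof -
    fix j'
    have a: "S4 - insert v (Nb EQ v) = (X - NV) \<union> {a, w}"
      unfolding S4_def using facts by (auto simp: nbq)
    have b: "S4 - {v} = S3" unfolding S3_def S4_def using facts by auto
    show "RQ S4 j' \<longleftrightarrow> RQ S3 j'"
      using Qlink[OF fS4 _ a acyc3, of j'] b by (simp add: S4_def)
  qed
  have acyc4: "\<And>m. \<not> RQ (S3 - {a}) m"
    by (rule Qcone[of _ b]) (use X uvV facts in \<open>auto simp: nbq S3_def intro: fin\<close>)
  have a4: "S3 - insert a (Nb EQ a) = insert w X"
    unfolding S3_def using facts by (auto simp: nbq)
  have d: "RQ S3 (Suc j) \<longleftrightarrow> RQ (insert w X) j" "\<not> RQ S3 0"
    using Qdel[OF fS3 _ acyc4 a4] by (auto simp: S3_def)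
  show "RQ (X \<union> {u, v, a, b}) (Suc j) \<longleftrightarrow> RQ (insert w X) j" using e1 e2 e3 d(1) by blast
  show "\<not> RQ (X \<union> {u, v, a, b}) 0" using e1 e2 e3 d(2) by blast
qed

end
end

context dsetup
begin

context
  fixes k :: "'k::field itself"
begin

lemma Qswap_v:
  assumes Y: "Y \<subseteq> V - {u, v}" "Y \<inter> NU = {}"
  shows "RR k EQ (insert v Y) j \<longleftrightarrow> RR k EQ (insert w Y) j"
proof -
  have nY: "u \<notin> Y" "v \<notin> Y" "a \<notin> Y" "b \<notin> Y" "w \<notin> Y" using Y aV bV wV by auto
  note facts = nY neqs ab wa wb vNU uNV Nb_irr notNb
  define S where "S = Y \<union> {v, w}"
  have fS: "finite S" unfolding S_def by (rule finS) (use Y uvV in auto)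
  have a1: "S - insert w (Nb EQ w) = insert v (Y - NV)"
    unfolding S_def using facts Y by (auto simp: nbq)
  have ac1: "\<And>m. \<not> RR k EQ (insert v (Y - NV)) m"
    by (rule Qcone[of _ v]) (use Y uvV facts in \<open>auto simp: nbq intro: finS\<close>)
  have a2: "S - insert v (Nb EQ v) = insert w (Y - NV)"
    unfolding S_def using facts Y by (auto simp: nbq)
  have ac2: "\<And>m. \<not> RR k EQ (insert w (Y - NV)) m"
    by (rule Qcone[of _ w]) (use Y uvV facts in \<open>auto simp: nbq intro: finS\<close>)
  have "RR k EQ S j \<longleftrightarrow> RR k EQ (S - {w}) j" by (rule Qlink[OF fS _ a1 ac1]) (simp add: S_def)
  moreover have "RR k EQ S j \<longleftrightarrow> RR k EQ (S - {v}) j" by (rule Qlink[OF fS _ a2 ac2]) (simp add: S_def)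
  moreover have "S - {w} = insert v Y" "S - {v} = insert w Y" unfolding S_def using facts by auto
  ultimately show ?thesis by simp
qed

lemma Qswap_u:
  assumes Y: "Y \<subseteq> V - {u, v}" "Y \<inter> NV = {}"
  shows "RR k EQ (insert u Y) j \<longleftrightarrow> RR k EQ (insert w Y) j"
proof -
  have nY: "u \<notin> Y" "v \<notin> Y" "a \<notin> Y" "b \<notin> Y" "w \<notin> Y" using Y aV bV wV by auto
  note facts = nY neqs ab wa wb vNU uNV Nb_irr notNb
  define S where "S = Y \<union> {u, w}"
  have fS: "finite S" unfolding S_def by (rule finS) (use Y uvV in auto)
  have a1: "S - insert w (Nb EQ w) = insert u (Y - NU)"
    unfolding S_def using facts Y by (auto simp: nbq)
  have ac1: "\<And>m. \<not> RR k EQ (insert u (Y - NU)) m"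
    by (rule Qcone[of _ u]) (use Y uvV facts in \<open>auto simp: nbq intro: finS\<close>)
  have a2: "S - insert u (Nb EQ u) = insert w (Y - NU)"
    unfolding S_def using facts Y by (auto simp: nbq)
  have ac2: "\<And>m. \<not> RR k EQ (insert w (Y - NU)) m"
    by (rule Qcone[of _ w]) (use Y uvV facts in \<open>auto simp: nbq intro: finS\<close>)
  have "RR k EQ S j \<longleftrightarrow> RR k EQ (S - {w}) j" by (rule Qlink[OF fS _ a1 ac1]) (simp add: S_def)
  moreover have "RR k EQ S j \<longleftrightarrow> RR k EQ (S - {u}) j" by (rule Qlink[OF fS _ a2 ac2]) (simp add: S_def)
  moreover have "S - {w} = insert u Y" "S - {u} = insert w Y" unfolding S_def using facts by auto
  ultimately show ?thesis by simp
qed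

definition goodQ :: "nat \<Rightarrow> bool" where
  "goodQ j \<longleftrightarrow> (\<exists>T \<subseteq> VC. \<exists>j'. j \<le> Suc j' \<and> RR k EQ T j')"

lemma goodI: "T \<subseteq> VC \<Longrightarrow> RR k EQ T j' \<Longrightarrow> j \<le> Suc j' \<Longrightarrow> goodQ j"
  unfolding goodQ_def by blast

lemma oneX:
  assumes "Y \<subseteq> V - {u, v}" "x \<in> {u, v, a, b}" "RR k EQ (insert x Y) j"
  shows "goodQ j"
proof -
  have f: "finite (insert x Y)" by (rule finS) (use assms(1,2) uvV in auto)
  have s1: "insert x Y - {x} \<subseteq> VC" using assms(1) by blast
  have s2: "insert x Y - insert x (Nb EQ x) \<subseteq> VC" using assms(1) by blast
  from QDL[OF f insertI1 assms(3)] show ?thesis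
  proof (elim disjE conjE)
    assume "RR k EQ (insert x Y - {x}) j"
    from goodI[OF s1 this] show ?thesis by simp
  next
    assume "1 \<le> j" "RR k EQ (insert x Y - insert x (Nb EQ x)) (j - 1)"
    from goodI[OF s2 this(2)] show ?thesis using \<open>1 \<le> j\<close> by simp
  qed
qed

lemma c0:
  assumes "X \<subseteq> V - {u, v}" "RR k EQ X j" shows "goodQ j"
proof -
  have "X \<subseteq> VC" using assms(1) by blast
  from goodI[OF this assms(2)] show ?thesis by simp
qed

lemma goodX:
  assumes "X \<subseteq> V - {u, v}" "RR k EQ X (j - 1)" shows "goodQ j"
proof -
  have "X \<subseteq> VC" using assms(1) by blast
  from goodI[OF this assms(2)] show ?thesis by simp
qed

lemma goodW:
  assumes "Y \<subseteq> V - {u, v}" "RR k EQ (insert w Y) (j - 1)" shows "goodQ j"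
proof -
  have "insert w Y \<subseteq> VC" using assms(1) by blast
  from goodI[OF this assms(2)] show ?thesis by simp
qed

lemma cab:
  assumes X: "X \<subseteq> V - {u, v}" and R: "RR k EQ (X \<union> {a, b}) j"
  shows "goodQ j"
proof -
  have nX: "u \<notin> X" "v \<notin> X" "a \<notin> X" "b \<notin> X" "w \<notin> X" using X aV bV wV by auto
  note facts = nX neqs ab wa wb vNU uNV Nb_irr notNb
  have f: "finite (X \<union> {a, b})" by (rule finS) (use X in auto)
  from QDL[OF f UnI2[OF insertI1] R] show ?thesis
  proof (elim disjE conjE)
    assume "RR k EQ (X \<union> {a, b} - {a}) j"
    moreover have "X \<union> {a, b} - {a} = insert b X" using facts by auto
    ultimately show ?thesis using oneX[OF X, of b] by simp
  next
    assume "1 \<le> j" "RR k EQ (X \<union> {a, b} - insert a (Nb EQ a)) (j - 1)"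
    moreover have "X \<union> {a, b} - insert a (Nb EQ a) = X" using facts by (auto simp: nbq)
    ultimately show ?thesis using goodX[OF X] by simp
  qed
qed

lemma upper_cases:
  assumes X: "X \<subseteq> V - {u, v}" and P: "P \<subseteq> {u, v, a, b}" and R: "RR k EQ (X \<union> P) j"
  shows "goodQ j"
proof -
  have nX: "u \<notin> X" "v \<notin> X" "a \<notin> X" "b \<notin> X" "w \<notin> X" using X aV bV wV by auto
  note facts = nX neqs ab wa wb vNU uNV Nb_irr notNb
  have fin: "\<And>Q. Q \<subseteq> {u, v, a, b} \<Longrightarrow> finite (X \<union> Q)"
    by (rule finS) (use X uvV in auto)
  have XNU: "X - NU \<subseteq> V - {u, v}" "(X - NU) \<inter> NU = {}" using X by auto
  have XNV: "X - NV \<subseteq> V - {u, v}" "(X - NV) \<inter> NV = {}" using X by auto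
  show ?thesis
  proof (cases "u \<in> P")
    case uP: True
    show ?thesis
    proof (cases "v \<in> P")
      case vP: True
      show ?thesis
      proof (cases "a \<in> P")
        case aP: True
        show ?thesis
        proof (cases "b \<in> P")
          case bP: True
          have "P = {u, v, a, b}" using P uP vP aP bP by auto
          then have R': "RR k EQ (X \<union> {u, v, a, b}) j" using R by simp
          then obtain j' where "j = Suc j'" using Qfull(2)[OF X] by (cases j) auto
          then have "RR k EQ (insert w X) j'" using R' iffD1[OF Qfull(1)[OF X, where k=k and j=j']] by simp
          then show ?thesis by (rule goodI[rotated]) (use X \<open>j = Suc j'\<close> in auto)
        next
          case bP: False
          have PP: "P = {u, v, a}" using P uP vP aP bP by auto
          from QDL[OF fin[OF P] UnI2[OF uP] R] show ?thesis
          proof (elim disjE conjE)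
            assume "RR k EQ (X \<union> P - {u}) j"
            moreover have "\<not> RR k EQ (X \<union> P - {u}) j"
              by (rule Qcone[of _ a]) (use X facts PP in \<open>auto simp: nbq intro: finS\<close>)
            ultimately show ?thesis by simp
          next
            assume "1 \<le> j" "RR k EQ (X \<union> P - insert u (Nb EQ u)) (j - 1)"
            moreover have "X \<union> P - insert u (Nb EQ u) = insert v (X - NU)" using facts PP by (auto simp: nbq)
            ultimately have "RR k EQ (insert w (X - NU)) (j - 1)" using Qswap_v[OF XNU] by simp
            then show ?thesis by (rule goodW[OF XNU(1)])
          qed
        qed
      next
        case aP: False
        show ?thesis
        proof (cases "b \<in> P")
          case bP: True
          have PP: "P = {u, v, b}" using P uP vP aP bP by auto
          from QDL[OF fin[OF P] UnI2[OF vP] R] show ?thesis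
          proof (elim disjE conjE)
            assume "RR k EQ (X \<union> P - {v}) j"
            moreover have "\<not> RR k EQ (X \<union> P - {v}) j"
              by (rule Qcone[of _ b]) (use X facts PP in \<open>auto simp: nbq intro: finS\<close>)
            ultimately show ?thesis by simp
          next
            assume "1 \<le> j" "RR k EQ (X \<union> P - insert v (Nb EQ v)) (j - 1)"
            moreover have "X \<union> P - insert v (Nb EQ v) = insert u (X - NV)" using facts PP by (auto simp: nbq)
            ultimately have "RR k EQ (insert w (X - NV)) (j - 1)" using Qswap_u[OF XNV] by simp
            then show ?thesis by (rule goodW[OF XNV(1)])
          qed
        next
          case bP: False
          have PP: "P = {u, v}" using P uP vP aP bP by auto
          from QDL[OF fin[OF P] UnI2[OF uP] R] show ?thesis
          proof (elim disjE conjE)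
            assume "RR k EQ (X \<union> P - {u}) j"
            moreover have "X \<union> P - {u} = insert v X" using facts PP by auto
            ultimately show ?thesis using oneX[OF X, of v] by simp
          next
            assume "1 \<le> j" "RR k EQ (X \<union> P - insert u (Nb EQ u)) (j - 1)"
            moreover have "X \<union> P - insert u (Nb EQ u) = insert v (X - NU)" using facts PP by (auto simp: nbq)
            ultimately have "RR k EQ (insert w (X - NU)) (j - 1)" using Qswap_v[OF XNU] by simp
            then show ?thesis by (rule goodW[OF XNU(1)])
          qed
        qed
      qed
    next
      case vP: False
      show ?thesis
      proof (cases "a \<in> P")
        case aP: True
        show ?thesis
        proof (cases "b \<in> P")
          case bP: True
          have PP: "P = {u, a, b}" using P uP vP aP bP by auto
          from QDL[OF fin[OF P] UnI2[OF uP] R] show ?thesis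
          proof (elim disjE conjE)
            assume "RR k EQ (X \<union> P - {u}) j"
            moreover have "X \<union> P - {u} = X \<union> {a, b}" using facts PP by auto
            ultimately show ?thesis using cab[OF X] by simp
          next
            assume "1 \<le> j" "RR k EQ (X \<union> P - insert u (Nb EQ u)) (j - 1)"
            moreover have "\<not> RR k EQ (X \<union> P - insert u (Nb EQ u)) (j - 1)"
              by (rule Qcone[of _ b]) (use X facts PP in \<open>auto simp: nbq intro: finS\<close>)
            ultimately show ?thesis by simp
          qed
        next
          case bP: False
          have PP: "P = {u, a}" using P uP vP aP bP by auto
          from QDL[OF fin[OF P] UnI2[OF aP] R] show ?thesis
          proof (elim disjE conjE)
            assume "RR k EQ (X \<union> P - {a}) j"
            moreover have "X \<union> P - {a} = insert u X" using facts PP by auto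
            ultimately show ?thesis using oneX[OF X, of u] by simp
          next
            assume "1 \<le> j" "RR k EQ (X \<union> P - insert a (Nb EQ a)) (j - 1)"
            moreover have "X \<union> P - insert a (Nb EQ a) = X" using facts PP by (auto simp: nbq)
            ultimately show ?thesis using goodX[OF X] by simp
          qed
        qed
      next
        case aP: False
        show ?thesis
        proof (cases "b \<in> P")
          case bP: True
          have PP: "P = {u, b}" using P uP vP aP bP by auto
          have "\<not> RR k EQ (X \<union> P) j"
            by (rule Qcone[of _ b]) (use X facts PP in \<open>auto simp: nbq intro: finS\<close>)
          then show ?thesis using R by simp
        next
          case bP: False
          have PP: "P = {u}" using P uP vP aP bP by auto
          then show ?thesis using oneX[OF X, of u] R by simp
        qed
      qed
    qed
  next
    case uP: False
    show ?thesis
    proof (cases "v \<in> P")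
      case vP: True
      show ?thesis
      proof (cases "a \<in> P")
        case aP: True
        show ?thesis
        proof (cases "b \<in> P")
          case bP: True
          have PP: "P = {v, a, b}" using P uP vP aP bP by auto
          from QDL[OF fin[OF P] UnI2[OF vP] R] show ?thesis
          proof (elim disjE conjE)
            assume "RR k EQ (X \<union> P - {v}) j"
            moreover have "X \<union> P - {v} = X \<union> {a, b}" using facts PP by auto
            ultimately show ?thesis using cab[OF X] by simp
          next
            assume "1 \<le> j" "RR k EQ (X \<union> P - insert v (Nb EQ v)) (j - 1)"
            moreover have "\<not> RR k EQ (X \<union> P - insert v (Nb EQ v)) (j - 1)"
              by (rule Qcone[of _ a]) (use X facts PP in \<open>auto simp: nbq intro: finS\<close>)
            ultimately show ?thesis by simp
          qed
        next
          case bP: False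
          have PP: "P = {v, a}" using P uP vP aP bP by auto
          have "\<not> RR k EQ (X \<union> P) j"
            by (rule Qcone[of _ a]) (use X facts PP in \<open>auto simp: nbq intro: finS\<close>)
          then show ?thesis using R by simp
        qed
      next
        case aP: False
        show ?thesis
        proof (cases "b \<in> P")
          case bP: True
          have PP: "P = {v, b}" using P uP vP aP bP by auto
          from QDL[OF fin[OF P] UnI2[OF bP] R] show ?thesis
          proof (elim disjE conjE)
            assume "RR k EQ (X \<union> P - {b}) j"
            moreover have "X \<union> P - {b} = insert v X" using facts PP by auto
            ultimately show ?thesis using oneX[OF X, of v] by simp
          next
            assume "1 \<le> j" "RR k EQ (X \<union> P - insert b (Nb EQ b)) (j - 1)"
            moreover have "X \<union> P - insert b (Nb EQ b) = X" using facts PP by (auto simp: nbq)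
            ultimately show ?thesis using goodX[OF X] by simp
          qed
        next
          case bP: False
          have PP: "P = {v}" using P uP vP aP bP by auto
          then show ?thesis using oneX[OF X, of v] R by simp
        qed
      qed
    next
      case vP: False
      show ?thesis
      proof (cases "a \<in> P")
        case aP: True
        show ?thesis
        proof (cases "b \<in> P")
          case bP: True
          have PP: "P = {a, b}" using P uP vP aP bP by auto
          then show ?thesis using cab[OF X] R by simp
        next
          case bP: False
          have PP: "P = {a}" using P uP vP aP bP by auto
          then show ?thesis using oneX[OF X, of a] R by simp
        qed
      next
        case aP: False
        show ?thesis
        proof (cases "b \<in> P")
          case bP: True
          have PP: "P = {b}" using P uP vP aP bP by auto
          then show ?thesis using oneX[OF X, of b] R by simp
        next
          case bP: False
          have PP: "P = {}" using P uP vP aP bP by auto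
          then show ?thesis using c0[OF X] R by simp
        qed
      qed
    qed
  qed
qed

lemma upper:
  assumes S: "S \<subseteq> V \<union> {a, b}" and R: "RR k EQ S j"
  shows "goodQ j"
proof -
  have "S = (S - {u, v, a, b}) \<union> (S \<inter> {u, v, a, b})" by auto
  then show ?thesis using upper_cases[of "S - {u, v, a, b}" "S \<inter> {u, v, a, b}" j] S R by auto
qed

lemma lower:
  assumes T: "T \<subseteq> VC" and R: "RR k EQ T j"
  shows "\<exists>S \<subseteq> V \<union> {a, b}. RR k EQ S (Suc j)"
proof (cases "w \<in> T")
  case True
  define X where "X = T - {w}"
  have X: "X \<subseteq> V - {u, v}" using T X_def by auto
  have "T = insert w X" using True X_def by auto
  then have "RR k EQ (X \<union> {u, v, a, b}) (Suc j)" using iffD2[OF Qfull(1)[OF X, where k=k and j=j]] R by simp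
  moreover have "X \<union> {u, v, a, b} \<subseteq> V \<union> {a, b}" using X uvV by auto
  ultimately show ?thesis by blast
next
  case False
  have X: "T \<subseteq> V - {u, v}" using T False by auto
  have nX: "u \<notin> T" "v \<notin> T" "a \<notin> T" "b \<notin> T" "w \<notin> T" using X aV bV wV by auto
  note facts = nX neqs ab wa wb vNU uNV Nb_irr notNb
  define S where "S = T \<union> {a, b}"
  have fS: "finite S" unfolding S_def by (rule finS) (use X in auto)
  have ac: "\<And>m. \<not> RR k EQ (S - {a}) m"
    by (rule Qcone[of _ b]) (use X facts in \<open>auto simp: nbq S_def intro: finS\<close>)
  have e: "S - insert a (Nb EQ a) = T" unfolding S_def using facts by (auto simp: nbq)
  have "RR k EQ S (Suc j)" using Qdel(1)[OF fS _ ac e] R by (simp add: S_def)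
  moreover have "S \<subseteq> V \<union> {a, b}" unfolding S_def using X by auto
  ultimately show ?thesis by blast
qed

lemma regsetD: "regset k (dsub G u v a b) = {j. \<exists>S \<subseteq> V \<union> {a, b}. RR k EQ S j}"
proof -
  have "fst (dsub G u v a b) = V \<union> {a, b}" by (simp add: dsub_def)
  then show ?thesis unfolding regset_def Ind_induced_indc
    using QD by (metis (no_types, lifting))
qed

end
end

context dsetup
begin

lemma regsetC: "regset k (contract G u v w) = {j. \<exists>T \<subseteq> VC. RR k EQ T j}"
proof -
  have "fst (contract G u v w) = VC" by (simp add: contract_def)
  then show ?thesis unfolding regset_def Ind_induced_indc
    using QC by (metis (no_types, lifting))
qed

lemma emptyD: "{} \<notin> snd (dsub G u v a b)"
  using Eprop by (auto simp: dsub_def)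

lemma emptyC: "{} \<notin> snd (contract G u v w)"
  using Eprop by (auto simp: contract_def)

lemma finD: "finite (fst (dsub G u v a b))" using finV by (simp add: dsub_def)
lemma finC: "finite (fst (contract G u v w))" using finV by (simp add: contract_def)

theorem main_loc:
  fixes k :: "'k::field itself"
  shows "reg k (dsub G u v a b) = reg k (contract G u v w) + 1"
proof -
  let ?D = "dsub G u v a b" and ?C = "contract G u v w"
  have fD: "finite (regset k ?D)" and zD: "0 \<in> regset k ?D" using regset_props[OF finD emptyD] by auto
  have fC: "finite (regset k ?C)" and zC: "0 \<in> regset k ?C" using regset_props[OF finC emptyC] by auto
  have mC: "reg k ?C \<in> regset k ?C" unfolding reg_regset using fC zC by (intro Max_in) auto
  have mD: "reg k ?D \<in> regset k ?D" unfolding reg_regset using fD zD by (intro Max_in) auto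
  obtain T where T: "T \<subseteq> VC" "RR k EQ T (reg k ?C)" using mC unfolding regsetC by blast
  obtain S where "S \<subseteq> V \<union> {a, b}" "RR k EQ S (Suc (reg k ?C))" using lower[OF T] by blast
  then have "Suc (reg k ?C) \<in> regset k ?D" unfolding regsetD by blast
  then have ge: "Suc (reg k ?C) \<le> reg k ?D" unfolding reg_regset by (rule Max_ge[OF fD])
  obtain S' where S': "S' \<subseteq> V \<union> {a, b}" "RR k EQ S' (reg k ?D)" using mD unfolding regsetD by blast
  obtain T' j' where "T' \<subseteq> VC" "reg k ?D \<le> Suc j'" "RR k EQ T' j'"
    using upper[OF S'] unfolding goodQ_def by blast
  moreover then have "j' \<in> regset k ?C" unfolding regsetC by blast
  then have "j' \<le> reg k ?C" unfolding reg_regset by (rule Max_ge[OF fC])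
  ultimately have "reg k ?D \<le> Suc (reg k ?C)" by simp
  with ge show ?thesis by simp
qed

end

lemma smono_inj:
  fixes h :: "'a::linorder \<Rightarrow> 'b::linorder"
  assumes "\<And>x y. x \<in> U \<Longrightarrow> y \<in> U \<Longrightarrow> x < y \<Longrightarrow> h x < h y"
  shows "inj_on h U"
proof (rule inj_onI)
  fix x y assume "x \<in> U" "y \<in> U" "h x = h y"
  then show "x = y" using assms[of x y] assms[of y x] by (metis less_irrefl neqE)
qed

lemma osign_img:
  fixes h :: "'a::linorder \<Rightarrow> 'b::linorder"
  assumes m: "\<And>x y. x \<in> U \<Longrightarrow> y \<in> U \<Longrightarrow> x < y \<Longrightarrow> h x < h y"
    and "x \<in> U" "A \<subseteq> U"
  shows "(osign (h x) (h ` A) :: 'k::field) = osign x A"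
proof -
  have inj: "inj_on h U" by (rule smono_inj[OF m])
  have "{y \<in> h ` A. y < h x} = h ` {y \<in> A. y < x}"
  proof
    show "{y \<in> h ` A. y < h x} \<subseteq> h ` {y \<in> A. y < x}"
    proof
      fix y' assume "y' \<in> {y \<in> h ` A. y < h x}"
      then obtain y where y: "y \<in> A" "y' = h y" "h y < h x" by auto
      have "y < x"
      proof (rule ccontr)
        assume "\<not> y < x"
        then have "x < y \<or> x = y" by auto
        then show False using m[of x y] y assms(2,3) by auto
      qed
      then show "y' \<in> h ` {y \<in> A. y < x}" using y by auto
    qed
  next
    show "h ` {y \<in> A. y < x} \<subseteq> {y \<in> h ` A. y < h x}"
      using m assms(2,3) by auto
  qed
  moreover have "card (h ` {y \<in> A. y < x}) = card {y \<in> A. y < x}"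
    by (rule card_image) (use inj assms(3) in \<open>auto intro: inj_on_subset\<close>)
  ultimately show ?thesis unfolding osign_def by simp
qed

lemma relabel_nz:
  fixes k :: "'k::field itself" and U :: "'a::linorder set" and h :: "'a \<Rightarrow> 'b::linorder"
  assumes U: "finite U" and KU: "K \<subseteq> Pow U"
    and m: "\<And>x y. x \<in> U \<Longrightarrow> y \<in> U \<Longrightarrow> x < y \<Longrightarrow> h x < h y"
    and R: "red_homology_nonzero k K j"
  shows "red_homology_nonzero k ((`) h ` K) j"
proof -
  have inj: "inj_on h U" by (rule smono_inj[OF m])
  define g where "g = inv_into U h"
  have gh: "\<And>x. x \<in> U \<Longrightarrow> g (h x) = x" unfolding g_def using inj by simp
  have gh2: "\<And>A. A \<subseteq> U \<Longrightarrow> g ` h ` A = A"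
  proof -
    fix A assume "A \<subseteq> U"
    then show "g ` h ` A = A" using gh by (force simp: image_image)
  qed
  have hg2: "\<And>B. B \<subseteq> h ` U \<Longrightarrow> h ` g ` B = B"
    unfolding g_def by (simp add: image_image f_inv_into_f subset_iff cong: image_cong)
  have gU: "\<And>B. B \<subseteq> h ` U \<Longrightarrow> g ` B \<subseteq> U" unfolding g_def by (auto intro: inv_into_into)
  have fhU: "finite (h ` U)" using U by simp
  have K'U: "(`) h ` K \<subseteq> Pow (h ` U)" using KU by auto
  have nz: "nzU k U K j" using R R_iff_nzU[OF U KU] by blast
  then obtain z :: "'a set \<Rightarrow> 'k" where zs: "supp_in z (faces K j)" and zc: "bd U z = (\<lambda>_. 0)"
    and znb: "\<not> (\<exists>c::'a set \<Rightarrow> 'k. supp_in c (faces K (Suc j)) \<and> bd U c = z)"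
    unfolding nzU_def by blast
  define Phi :: "('a set \<Rightarrow> 'k) \<Rightarrow> 'b set \<Rightarrow> 'k" where
    "Phi c \<tau> = (if \<tau> \<subseteq> h ` U then c (g ` \<tau>) else 0)" for c \<tau>
  define Psi :: "('b set \<Rightarrow> 'k) \<Rightarrow> 'a set \<Rightarrow> 'k" where
    "Psi c' \<sigma> = (if \<sigma> \<subseteq> U then c' (h ` \<sigma>) else 0)" for c' \<sigma>
  have bdPhi: "bd (h ` U) (Phi c) = Phi (bd U c)" for c
  proof
    fix \<tau>
    show "bd (h ` U) (Phi c) \<tau> = Phi (bd U c) \<tau>"
    proof (cases "\<tau> \<subseteq> h ` U")
      case False
      have "bd (h ` U) (Phi c) \<tau> = 0" unfolding bd_def
        by (rule sum.neutral) (use False in \<open>auto simp: Phi_def\<close>)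
      then show ?thesis using False by (simp add: Phi_def)
    next
      case True
      define \<sigma> where "\<sigma> = g ` \<tau>"
      have sU: "\<sigma> \<subseteq> U" unfolding \<sigma>_def by (rule gU[OF True])
      have t: "\<tau> = h ` \<sigma>" unfolding \<sigma>_def using hg2[OF True] by simp
      have di: "h ` U - \<tau> = h ` (U - \<sigma>)" unfolding t using inj sU by (simp add: inj_on_image_set_diff)
      have "bd (h ` U) (Phi c) \<tau> = (\<Sum>x'\<in>h ` (U - \<sigma>). osign x' (insert x' \<tau>) * Phi c (insert x' \<tau>))"
        unfolding bd_def di ..
      also have "\<dots> = (\<Sum>x\<in>U - \<sigma>. osign (h x) (insert (h x) \<tau>) * Phi c (insert (h x) \<tau>))"
        by (rule sum.reindex_cong[of h]) (use inj in \<open>auto intro: inj_on_subset\<close>)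
      also have "\<dots> = (\<Sum>x\<in>U - \<sigma>. osign x (insert x \<sigma>) * c (insert x \<sigma>))"
      proof (rule sum.cong[OF refl])
        fix x assume x: "x \<in> U - \<sigma>"
        have e: "insert (h x) \<tau> = h ` insert x \<sigma>" unfolding t by simp
        have s: "insert x \<sigma> \<subseteq> U" using x sU by auto
        have "Phi c (insert (h x) \<tau>) = c (insert x \<sigma>)"
          unfolding e Phi_def using s gh2[OF s] by auto
        moreover have "(osign (h x) (h ` insert x \<sigma>) :: 'k) = osign x (insert x \<sigma>)"
          by (rule osign_img[OF m]) (use x s in auto)
        ultimately show "osign (h x) (insert (h x) \<tau>) * Phi c (insert (h x) \<tau>) = osign x (insert x \<sigma>) * c (insert x \<sigma>)"
          unfolding e by simp
      qed
      also have "\<dots> = bd U c \<sigma>" by (simp add: bd_def)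
      also have "\<dots> = Phi (bd U c) \<tau>" using True by (simp add: Phi_def \<sigma>_def)
      finally show ?thesis .
    qed
  qed
  have Phis: "supp_in (Phi z) (faces ((`) h ` K) j)"
    unfolding supp_in_def
  proof (intro allI impI)
    fix \<tau> assume "Phi z \<tau> \<noteq> 0"
    then have T: "\<tau> \<subseteq> h ` U" and zn: "z (g ` \<tau>) \<noteq> 0" by (auto simp: Phi_def split: if_splits)
    then have f: "g ` \<tau> \<in> faces K j" using zs by (auto simp: supp_in_def)
    have "\<tau> = h ` g ` \<tau>" using hg2[OF T] by simp
    moreover have "card (h ` g ` \<tau>) = card (g ` \<tau>)"
      by (rule card_image) (use inj gU[OF T] in \<open>auto intro: inj_on_subset\<close>)
    ultimately show "\<tau> \<in> faces ((`) h ` K) j" using f by (auto simp: faces_def)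
  qed
  have Phic: "bd (h ` U) (Phi z) = (\<lambda>_. 0)" unfolding bdPhi zc by (simp add: Phi_def fun_eq_iff)
  have "\<not> (\<exists>c'::'b set \<Rightarrow> 'k. supp_in c' (faces ((`) h ` K) (Suc j)) \<and> bd (h ` U) c' = Phi z)"
  proof
    assume "\<exists>c'::'b set \<Rightarrow> 'k. supp_in c' (faces ((`) h ` K) (Suc j)) \<and> bd (h ` U) c' = Phi z"
    then obtain c' :: "'b set \<Rightarrow> 'k" where cs: "supp_in c' (faces ((`) h ` K) (Suc j))"
      and cb: "bd (h ` U) c' = Phi z" by blast
    define c where "c = Psi c'"
    have c'U: "\<And>\<tau>. c' \<tau> \<noteq> 0 \<Longrightarrow> \<tau> \<subseteq> h ` U" using cs K'U unfolding supp_in_def faces_def by blast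
    have Phic': "Phi c = c'"
    proof
      fix \<tau>
      show "Phi c \<tau> = c' \<tau>"
      proof (cases "\<tau> \<subseteq> h ` U")
        case True
        then show ?thesis using gU[OF True] hg2[OF True] by (simp add: Phi_def c_def Psi_def)
      next
        case False
        then show ?thesis using c'U by (auto simp: Phi_def)
      qed
    qed
    have cs': "supp_in c (faces K (Suc j))"
      unfolding supp_in_def
    proof (intro allI impI)
      fix \<sigma> assume "c \<sigma> \<noteq> 0"
      then have sU: "\<sigma> \<subseteq> U" and cn: "c' (h ` \<sigma>) \<noteq> 0" by (auto simp: c_def Psi_def split: if_splits)
      then have "h ` \<sigma> \<in> faces ((`) h ` K) (Suc j)" using cs by (auto simp: supp_in_def)
      then obtain \<rho> where r: "\<rho> \<in> K" "h ` \<sigma> = h ` \<rho>" "card (h ` \<rho>) = Suc j" by (auto simp: faces_def)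
      have rU: "\<rho> \<subseteq> U" using r(1) KU by auto
      have "\<sigma> = \<rho>" using r(2) inj sU rU by (simp add: inj_on_image_eq_iff)
      moreover have "card (h ` \<rho>) = card \<rho>"
        by (rule card_image) (use inj rU in \<open>auto intro: inj_on_subset\<close>)
      ultimately show "\<sigma> \<in> faces K (Suc j)" using r by (auto simp: faces_def)
    qed
    have cU: "\<And>\<sigma>. c \<sigma> \<noteq> 0 \<Longrightarrow> \<sigma> \<subseteq> U" using cs' KU by (auto simp: supp_in_def faces_def)
    have zU: "\<And>\<sigma>. z \<sigma> \<noteq> 0 \<Longrightarrow> \<sigma> \<subseteq> U" using zs KU by (auto simp: supp_in_def faces_def)
    have PP: "Phi (bd U c) = Phi z" using bdPhi[of c] Phic' cb by simp
    have "bd U c = z"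
    proof
      fix \<sigma>
      show "bd U c \<sigma> = z \<sigma>"
      proof (cases "\<sigma> \<subseteq> U")
        case True
        have "Phi (bd U c) (h ` \<sigma>) = Phi z (h ` \<sigma>)" using PP by simp
        then show ?thesis using True gh2[OF True] by (simp add: Phi_def image_mono)
      next
        case False
        have "bd U c \<sigma> = 0" unfolding bd_def
          by (rule sum.neutral) (use False cU in \<open>force\<close>)
        moreover have "z \<sigma> = 0" using zU False by blast
        ultimately show ?thesis by simp
      qed
    qed
    then show False using znb cs' by blast
  qed
  then have "nzU k (h ` U) ((`) h ` K) j" unfolding nzU_def using Phis Phic by blast
  then show ?thesis using R_iff_nzU[OF fhU K'U] by blast
qed

definition map_graph :: "('a \<Rightarrow> 'b) \<Rightarrow> 'a graph \<Rightarrow> 'b graph" where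
  "map_graph h H = (h ` fst H, (`) h ` snd H)"

lemma Ind_map:
  assumes inj: "inj_on h (fst H)" and EV: "\<forall>e\<in>snd H. e \<subseteq> fst H" and S: "S \<subseteq> fst H"
  shows "Ind_induced (map_graph h H) (h ` S) = (`) h ` Ind_induced H S"
proof
  show "Ind_induced (map_graph h H) (h ` S) \<subseteq> (`) h ` Ind_induced H S"
  proof
    fix T' assume T': "T' \<in> Ind_induced (map_graph h H) (h ` S)"
    then have T'S: "T' \<subseteq> h ` S" and ind: "\<And>e'. e' \<in> (`) h ` snd H \<Longrightarrow> e' \<subseteq> h ` S \<Longrightarrow> \<not> e' \<subseteq> T'"
      by (auto simp: Ind_induced_def map_graph_def)
    define T where "T = {x \<in> S. h x \<in> T'}"
    have hT: "h ` T = T'" using T'S unfolding T_def by auto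
    have "T \<in> Ind_induced H S"
      unfolding Ind_induced_def
    proof (intro CollectI conjI ballI impI notI)
      show "T \<subseteq> S" unfolding T_def by auto
    next
      fix e assume e: "e \<in> snd H" "e \<subseteq> S" "e \<subseteq> T"
      then have "h ` e \<subseteq> h ` S" "h ` e \<subseteq> T'" using hT by auto
      then show False using ind[of "h ` e"] e(1) by auto
    qed
    then show "T' \<in> (`) h ` Ind_induced H S" using hT by auto
  qed
next
  show "(`) h ` Ind_induced H S \<subseteq> Ind_induced (map_graph h H) (h ` S)"
  proof
    fix T' assume "T' \<in> (`) h ` Ind_induced H S"
    then obtain T where T: "T' = h ` T" "T \<subseteq> S" "\<And>e. e \<in> snd H \<Longrightarrow> e \<subseteq> S \<Longrightarrow> \<not> e \<subseteq> T"
      by (auto simp: Ind_induced_def)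
    show "T' \<in> Ind_induced (map_graph h H) (h ` S)"
      unfolding Ind_induced_def map_graph_def
    proof (intro CollectI conjI ballI impI notI)
      show "T' \<subseteq> h ` S" using T by auto
    next
      fix e' assume e': "e' \<in> snd (h ` fst H, (`) h ` snd H)" "e' \<subseteq> h ` S" "e' \<subseteq> T'"
      then obtain e where e: "e \<in> snd H" "e' = h ` e" by auto
      have eV: "e \<subseteq> fst H" using EV e(1) by auto
      have "e \<subseteq> S"
      proof
        fix x assume "x \<in> e"
        then have "h x \<in> h ` S" "x \<in> fst H" using e' e eV by auto
        then show "x \<in> S" using inj_on_image_mem_iff[OF inj _ S] by blast
      qed
      moreover have "e \<subseteq> T"
      proof
        fix x assume "x \<in> e"
        then have "h x \<in> h ` T" "x \<in> fst H" using e' e eV T(1) by auto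
        moreover have "T \<subseteq> fst H" using T(2) S by auto
        ultimately show "x \<in> T" using inj_on_image_mem_iff[OF inj] by blast
      qed
      ultimately show False using T(3) e(1) by blast
    qed
  qed
qed


lemma reg_relabel:
  fixes H :: "'a::linorder graph" and h :: "'a \<Rightarrow> 'b::linorder" and k :: "'k::field itself"
  assumes fin: "finite (fst H)" and EV: "\<forall>e\<in>snd H. e \<subseteq> fst H"
    and m: "\<And>x y. x \<in> fst H \<Longrightarrow> y \<in> fst H \<Longrightarrow> x < y \<Longrightarrow> h x < h y"
  shows "reg k (map_graph h H) = reg k H"
proof -
  have inj: "inj_on h (fst H)" by (rule smono_inj[OF m])
  define g where "g = inv_into (fst H) h"
  have gh: "\<And>x. x \<in> fst H \<Longrightarrow> g (h x) = x" unfolding g_def using inj by simp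
  have gm: "\<And>x' y'. x' \<in> h ` fst H \<Longrightarrow> y' \<in> h ` fst H \<Longrightarrow> x' < y' \<Longrightarrow> g x' < g y'"
  proof -
    fix x' y' assume "x' \<in> h ` fst H" "y' \<in> h ` fst H" "x' < y'"
    then obtain x y where xy: "x \<in> fst H" "y \<in> fst H" "x' = h x" "y' = h y" "h x < h y" by auto
    have "x < y"
    proof (rule ccontr)
      assume "\<not> x < y"
      then have "y < x \<or> x = y" by auto
      then show False using m[of y x] xy by auto
    qed
    then show "g x' < g y'" using xy gh by simp
  qed
  have "regset k (map_graph h H) = regset k H"
  proof
    show "regset k (map_graph h H) \<subseteq> regset k H"
    proof
      fix j assume "j \<in> regset k (map_graph h H)"
      then obtain S' where S': "S' \<subseteq> h ` fst H" "red_homology_nonzero k (Ind_induced (map_graph h H) S') j"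
        unfolding regset_def map_graph_def by auto
      define S where "S = {x \<in> fst H. h x \<in> S'}"
      have SV: "S \<subseteq> fst H" unfolding S_def by auto
      have hS: "h ` S = S'" using S'(1) unfolding S_def by auto
      let ?K = "Ind_induced H S"
      have R1: "red_homology_nonzero k ((`) h ` ?K) j" using S'(2) Ind_map[OF inj EV SV] hS by simp
      have KV: "?K \<subseteq> Pow (fst H)" using SV by (auto simp: Ind_induced_def)
      have K'V: "(`) h ` ?K \<subseteq> Pow (h ` fst H)" using KV by auto
      have R2: "red_homology_nonzero k ((`) g ` (`) h ` ?K) j"
        by (rule relabel_nz[OF _ K'V gm R1]) (use fin in auto)
      have "(`) g ` (`) h ` ?K = ?K"
      proof -
        have "\<And>T. T \<in> ?K \<Longrightarrow> g ` h ` T = T"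
        proof -
          fix T assume "T \<in> ?K"
          then have "T \<subseteq> fst H" using KV by auto
          then show "g ` h ` T = T" using gh by (force simp: image_image)
        qed
        then show ?thesis by (force simp: image_image)
      qed
      then have "red_homology_nonzero k ?K j" using R2 by simp
      then show "j \<in> regset k H" unfolding regset_def using SV by blast
    qed
  next
    show "regset k H \<subseteq> regset k (map_graph h H)"
    proof
      fix j assume "j \<in> regset k H"
      then obtain S where SV: "S \<subseteq> fst H" and R: "red_homology_nonzero k (Ind_induced H S) j"
        unfolding regset_def by auto
      have KV: "Ind_induced H S \<subseteq> Pow (fst H)" using SV by (auto simp: Ind_induced_def)
      have "red_homology_nonzero k ((`) h ` Ind_induced H S) j"
        by (rule relabel_nz[OF fin KV m R])
      then have "red_homology_nonzero k (Ind_induced (map_graph h H) (h ` S)) j"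
        using Ind_map[OF inj EV SV] by simp
      moreover have "h ` S \<subseteq> fst (map_graph h H)" using SV by (auto simp: map_graph_def)
      ultimately show "j \<in> regset k (map_graph h H)" unfolding regset_def by blast
    qed
  qed
  then show ?thesis by (simp add: reg_regset)
qed

lemma graph_EV:
  assumes "is_graph G" shows "\<forall>e\<in>snd G. e \<subseteq> fst G"
proof
  fix e assume "e \<in> snd G"
  then obtain x y where "e = {x, y}" "x \<in> fst G" "y \<in> fst G" using assms unfolding is_graph_def by meson
  then show "e \<subseteq> fst G" by simp
qed

theorem mainTheorem18:
  fixes G :: "'a::linorder graph" and u v a b w :: 'a
  assumes "is_graph G"
    and "{u, v} \<in> snd G"
    and "a \<notin> fst G" and "b \<notin> fst G" and "a \<noteq> b"
    and "w \<notin> fst G"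
  shows "reg TYPE('k::field) (dsub G u v a b) = reg TYPE('k) (contract G u v w) + 1"
proof (cases "w \<noteq> a \<and> w \<noteq> b")
  case True
  interpret dsetup G u v a b w using assms True by unfold_locales auto
  show ?thesis by (rule main_loc)
next
  case False
  let ?V = "fst G" and ?E = "snd G"
  define f :: "'a \<Rightarrow> 'a \<times> bool" where "f x = (x, False)" for x
  define g :: "'a \<Rightarrow> 'a \<times> bool" where "g x = (if x = w then (x, True) else (x, False))" for x
  define G' where "G' = map_graph f G"
  have injf: "inj f" unfolding f_def by (auto intro: injI)
  have injif: "inj ((`) f)" using injf by (simp add: inj_image_eq_iff inj_def)
  have monof: "\<And>x y. x < y \<Longrightarrow> f x < f y" unfolding f_def by (simp add: less_prod_def)
  have EV: "\<forall>e\<in>?E. e \<subseteq> ?V" by (rule graph_EV[OF assms(1)])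
  have finV: "finite ?V" using assms(1) by (simp add: is_graph_def)
  have uvV: "u \<in> ?V" "v \<in> ?V" using EV assms(2) by auto
  have gf: "\<And>x. x \<in> ?V \<Longrightarrow> g x = f x" using assms(6) unfolding f_def g_def by auto
  have gr': "is_graph G'"
    unfolding is_graph_def G'_def map_graph_def
  proof (intro conjI ballI)
    show "finite (fst (f ` ?V, (`) f ` ?E))" using finV by simp
  next
    fix e' assume "e' \<in> snd (f ` ?V, (`) f ` ?E)"
    then obtain e where e: "e \<in> ?E" "e' = f ` e" by auto
    then obtain x y where xy: "x \<noteq> y" "e = {x, y}" "x \<in> ?V" "y \<in> ?V" using assms(1) unfolding is_graph_def by meson
    have "f x \<noteq> f y" using xy(1) injf by (simp add: inj_eq)
    then show "\<exists>x y. x \<noteq> y \<and> e' = {x, y} \<and> x \<in> fst (f ` ?V, (`) f ` ?E) \<and> y \<in> fst (f ` ?V, (`) f ` ?E)"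
      using e xy by (intro exI[of _ "f x"] exI[of _ "f y"]) auto
  qed
  have ds: "dsetup G' (f u) (f v) (f a) (f b) (w, True)"
  proof
    show "is_graph G'" by (rule gr')
    have "f ` {u, v} \<in> (`) f ` ?E" using assms(2) by (rule imageI)
    then show "{f u, f v} \<in> snd G'" unfolding G'_def map_graph_def by simp
    show "f a \<notin> fst G'" using assms(3) unfolding G'_def map_graph_def f_def by auto
    show "f b \<notin> fst G'" using assms(4) unfolding G'_def map_graph_def f_def by auto
    show "f a \<noteq> f b" using assms(5) unfolding f_def by simp
    show "(w, True) \<notin> fst G'" unfolding G'_def map_graph_def f_def by auto
    show "(w, True) \<noteq> f a" "(w, True) \<noteq> f b" unfolding f_def by auto
  qed
  have Deq: "map_graph f (dsub G u v a b) = dsub G' (f u) (f v) (f a) (f b)"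
    unfolding map_graph_def dsub_def G'_def
    by (simp add: image_Un image_set_diff[OF injif])
  have DEV: "\<forall>e\<in>snd (dsub G u v a b). e \<subseteq> fst (dsub G u v a b)"
    using EV uvV by (auto simp: dsub_def)
  have regD: "reg TYPE('k) (map_graph f (dsub G u v a b)) = reg TYPE('k) (dsub G u v a b)"
    by (rule reg_relabel) (use finV DEV monof in \<open>auto simp: dsub_def\<close>)
  have nbf: "\<And>x. nbhd G' (f x) = f ` nbhd G x"
  proof
    fix x
    show "nbhd G' (f x) \<subseteq> f ` nbhd G x"
    proof
      fix z' assume "z' \<in> nbhd G' (f x)"
      then obtain e where e: "e \<in> ?E" "{f x, z'} = f ` e" unfolding nbhd_def G'_def map_graph_def by auto
      then obtain z where z: "z' = f z" by blast
      then have "f ` {x, z} = f ` e" using e(2) by (simp only: image_insert image_empty)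
      then have "{x, z} = e" by (rule inj_image_eq_iff[OF injf, THEN iffD1])
      then show "z' \<in> f ` nbhd G x" using e z by (auto simp: nbhd_def)
    qed
  next
    fix x
    show "f ` nbhd G x \<subseteq> nbhd G' (f x)"
    proof
      fix z' assume "z' \<in> f ` nbhd G x"
      then obtain z where z: "z' = f z" "{x, z} \<in> ?E" unfolding nbhd_def by auto
      have "f ` {x, z} \<in> (`) f ` ?E" using z(2) by (rule imageI)
      then show "z' \<in> nbhd G' (f x)" using z(1) unfolding nbhd_def G'_def map_graph_def by simp
    qed
  qed
  have nbV: "\<And>x. nbhd G x \<subseteq> ?V" using EV by (auto simp: nbhd_def)
  have Ceq: "map_graph g (contract G u v w) = contract G' (f u) (f v) (w, True)"
  proof -
    have fst1: "g ` ((?V - {u, v}) \<union> {w}) = (f ` ?V - {f u, f v}) \<union> {(w, True)}"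
    proof -
      have "g ` (?V - {u, v}) = f ` (?V - {u, v})" using gf by (auto intro: image_cong)
      also have "\<dots> = f ` ?V - {f u, f v}" using injf by (simp add: image_set_diff)
      moreover have "g w = (w, True)" by (simp add: g_def)
      moreover have "g ` ((?V - {u, v}) \<union> {w}) = g ` (?V - {u, v}) \<union> {g w}" by simp
      ultimately show ?thesis by simp
    qed
    have s1: "(`) g ` {e \<in> ?E. u \<notin> e \<and> v \<notin> e} = {e' \<in> (`) f ` ?E. f u \<notin> e' \<and> f v \<notin> e'}"
    proof -
      have "(`) g ` {e \<in> ?E. u \<notin> e \<and> v \<notin> e} = (`) f ` {e \<in> ?E. u \<notin> e \<and> v \<notin> e}"
        using gf EV by (intro image_cong refl) (auto intro: image_cong)
      also have "\<dots> = {e' \<in> (`) f ` ?E. f u \<notin> e' \<and> f v \<notin> e'}"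
        using injf by (auto simp: inj_image_mem_iff inj_eq)
      finally show ?thesis .
    qed
    have s2: "(`) g ` {{w, z} | z. z \<in> (nbhd G u \<union> nbhd G v) - {u, v}}
        = {{(w, True), z'} | z'. z' \<in> (nbhd G' (f u) \<union> nbhd G' (f v)) - {f u, f v}}"
    proof -
      have "(`) g ` {{w, z} | z. z \<in> (nbhd G u \<union> nbhd G v) - {u, v}}
          = {{(w, True), f z} | z. z \<in> (nbhd G u \<union> nbhd G v) - {u, v}}"
      proof -
        have "\<And>z. z \<in> nbhd G u \<union> nbhd G v \<Longrightarrow> g ` {w, z} = {(w, True), f z}"
        proof -
          fix z assume "z \<in> nbhd G u \<union> nbhd G v"
          then have "z \<in> ?V" using nbV by blast
          then have "g z = f z" by (rule gf)
          moreover have "g w = (w, True)" by (simp add: g_def)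
          ultimately show "g ` {w, z} = {(w, True), f z}" by (simp only: image_insert image_empty)
        qed
        then show ?thesis by blast
      qed
      also have "\<dots> = {{(w, True), z'} | z'. z' \<in> (nbhd G' (f u) \<union> nbhd G' (f v)) - {f u, f v}}"
      proof (rule set_eqI, rule iffI)
        fix e assume "e \<in> {{(w, True), f z} | z. z \<in> (nbhd G u \<union> nbhd G v) - {u, v}}"
        then obtain z where z: "e = {(w, True), f z}" "z \<in> (nbhd G u \<union> nbhd G v) - {u, v}" by blast
        have "f z \<in> (nbhd G' (f u) \<union> nbhd G' (f v)) - {f u, f v}"
          using z(2) injf unfolding nbf by (auto simp: inj_eq)
        then show "e \<in> {{(w, True), z'} | z'. z' \<in> (nbhd G' (f u) \<union> nbhd G' (f v)) - {f u, f v}}"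
          using z(1) by blast
      next
        fix e assume "e \<in> {{(w, True), z'} | z'. z' \<in> (nbhd G' (f u) \<union> nbhd G' (f v)) - {f u, f v}}"
        then obtain z' where z': "e = {(w, True), z'}" "z' \<in> (nbhd G' (f u) \<union> nbhd G' (f v)) - {f u, f v}" by blast
        then obtain z where z: "z' = f z" "z \<in> nbhd G u \<union> nbhd G v" unfolding nbf by blast
        then have "z \<in> (nbhd G u \<union> nbhd G v) - {u, v}" using z' by auto
        then show "e \<in> {{(w, True), f z} | z. z \<in> (nbhd G u \<union> nbhd G v) - {u, v}}"
          using z z' by blast
      qed
      finally show ?thesis .
    qed
    show ?thesis
      unfolding map_graph_def contract_def G'_def[symmetric] using fst1 s1 s2
      by (simp add: image_Un G'_def map_graph_def)
  qed
  have CEV: "\<forall>e\<in>snd (contract G u v w). e \<subseteq> fst (contract G u v w)"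
    using EV nbV by (auto simp: contract_def)
  have monog: "\<And>x y. x \<in> fst (contract G u v w) \<Longrightarrow> y \<in> fst (contract G u v w) \<Longrightarrow> x < y \<Longrightarrow> g x < g y"
    unfolding g_def by (auto simp: less_prod_def contract_def)
  have regC: "reg TYPE('k) (map_graph g (contract G u v w)) = reg TYPE('k) (contract G u v w)"
    by (rule reg_relabel[OF _ CEV monog]) (use finV in \<open>auto simp: contract_def\<close>)
  have "reg TYPE('k) (dsub G' (f u) (f v) (f a) (f b)) = reg TYPE('k) (contract G' (f u) (f v) (w, True)) + 1"
    by (rule dsetup.main_loc[OF ds])
  then show ?thesis using regD regC Deq Ceq by simp
qed

end
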